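(* Let $(R,\mathfrak m,k)$ be a Noetherian local ring, $j\ge2$, and $M$ a finitely generated $R$-module with $p:=\operatorname{pd}_RM<\infty$ and minimal free resolution $\mathbf F_\bullet$. Suppose $\mathcal S_j\mathbf F_\bullet$ is a free resolution of $\mathcal S_j(M)$. Then $\mathcal S_j\mathbf F_\bullet$ is a minimal free resolution of $\mathcal S_j(M)$ if and only if, for all $t=0,1,\dots,\operatorname{pd}_R\mathcal S_j(M)$, $$\beta_t^R(\mathcal S_j(M))=\sum_{\substack{(a_0,\dots,a_p)\in\mathbb N^{p+1}\\ \sum a_i=j,\ \sum ia_i=t}}\ \prod_{\substack{0\le i\le p\\ i\text{ even}}}\binom{\beta_i^R(M)+a_i-1}{a_i}\prod_{\substack{0\le i\le p\\ i\text{ odd}}}\binom{\beta_i^R(M)}{a_i}$$ (this is the formula for both parities of $p$).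
   Context: $\beta_i^R(N)$ denotes the $i$-th Betti number, the rank of the $i$-th module in a minimal free resolution of $N$ (equivalently $\dim_k\operatorname{Tor}_i^R(k,N)$). $\mathcal S_j(M)$ denotes the $j$-th graded component of the symmetric algebra $\mathcal S_R(M)$. For a free module $F$ of finite rank, $D_a(F)$ is the $a$-th divided power (the symmetric tensors in $F^{\otimes a}$; free with basis the divided power monomials $f_1^{(c_1)}\cdots f_r^{(c_r)}$, $\sum c_l=a$, for a basis $f_1,\dots,f_r$ of $F$), and $\Lambda^aF$ is the $a$-th exterior power. For a finite free resolution $\mathbf F_\bullet:0\to F_p\xrightarrow{\phi_p}\cdots\xrightarrow{\phi_1}F_0$ of $M$, the complex $\mathcal S_j\mathbf F_\bullet$ has $(\mathcal S_j\mathbf F_\bullet)_t=\bigoplus D_{a_0}F_0\otimes\Lambda^{a_1}F_1\otimes D_{a_2}F_2\otimes\Lambda^{a_3}F_3\otimes\cdots$ (divided powers of even-indexed $F_i$, exterior powers of odd-indexed $F_i$), summed over $(a_0,\dots,a_p)\in\mathbb N^{p+1}$ with $\sum a_i=j$, $\sum ia_i=t$. The differential maps the summand indexed by $(a_0,\dots,a_p)$ only to summands indexed by $(a_0,\dots,a_i+1,a_{i+1}-1,\dots,a_p)$, by $(-1)^{a_0+2a_1+\cdots+(i+1)a_i}$ times the identity on other factors tensored with: for $i$ odd, $D_aF_{i+1}\otimes\Lambda^bF_i\to D_{a-1}F_{i+1}\otimes\Lambda^{b+1}F_i$, $f_1^{(c_1)}\cdots f_r^{(c_r)}\otimes v\mapsto\sum_l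 f_1^{(c_1)}\cdots f_l^{(c_l-1)}\cdots f_r^{(c_r)}\otimes\phi_{i+1}(f_l)\wedge v$; for $i$ even, $\Lambda^aF_{i+1}\otimes D_bF_i\to\Lambda^{a-1}F_{i+1}\otimes D_{b+1}F_i$, $f_{l_1}\wedge\cdots\wedge f_{l_a}\otimes w\mapsto\sum_s(-1)^sf_{l_1}\wedge\cdots\widehat{f_{l_s}}\cdots\wedge f_{l_a}\otimes\phi_{i+1}(f_{l_s})\cup w$, where $g_m\cup g_1^{(c_1)}\cdots g_n^{(c_n)}$ raises $c_m$ by one (extended linearly). Standing assumption: the characteristic of $R$ is such that $\mathcal S_j\mathbf F_\bullet$ is a complex (e.g. all integers $m$ with $2\le m\le jp$ are invertible in $R$). A free resolution is minimal if $\operatorname{Im}\phi_i\subseteq\mathfrak mF_{i-1}$ for all $i$.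
   Formalization: In the differential of $\mathcal S_j\mathbf F_\bullet$, the sign $(-1)^{a_0+2a_1+\cdots+(i+1)a_i}$ becomes $(-1)^{a_1+a_3+\cdots}$ summed over odd indices below i, and $g_m\cup g_1^{(c_1)}\cdots g_n^{(c_n)}$ is $c_m+1$ times the monomial with $c_m$ raised by one. This corrects a misprint. *)

theory Defs
  imports Complex_Main "HOL-Library.Multiset"
begin

definition is_ideal :: "'a::comm_ring_1 set \<Rightarrow> bool" where
  "is_ideal I \<longleftrightarrow> 0 \<in> I \<and> (\<forall>x\<in>I. \<forall>y\<in>I. x + y \<in> I) \<and> (\<forall>r. \<forall>x\<in>I. r * x \<in> I)"

definition ideal_gen :: "'a::comm_ring_1 set \<Rightarrow> 'a set" where
  "ideal_gen S = {y. \<exists>c. y = (\<Sum>s\<in>S. c s * s)}"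

definition noetherian_ring :: "'a::comm_ring_1 itself \<Rightarrow> bool" where
  "noetherian_ring _ \<longleftrightarrow>
     (\<forall>I::'a set. is_ideal I \<longrightarrow> (\<exists>S. finite S \<and> S \<subseteq> I \<and> I = ideal_gen S))"

definition maximal_ideal :: "'a::comm_ring_1 set \<Rightarrow> bool" where
  "maximal_ideal m \<longleftrightarrow> is_ideal m \<and> m \<noteq> UNIV \<and>
     (\<forall>J. is_ideal J \<and> m \<subseteq> J \<longrightarrow> J = m \<or> J = UNIV)"

definition local_ring :: "'a::comm_ring_1 set \<Rightarrow> bool" where
  "local_ring m \<longleftrightarrow> maximal_ideal m \<and> (\<forall>J. maximal_ideal J \<longrightarrow> J = m)"

text \<open>A module structure is a scalar multiplication scale with module scale (HOL.Modules);
  the module is the whole type.  Finitely generated: spanned by a finite set.\<close>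
definition fin_gen :: "('a::comm_ring_1 \<Rightarrow> 'm::ab_group_add \<Rightarrow> 'm) \<Rightarrow> bool" where
  "fin_gen scale \<longleftrightarrow> (\<exists>S. finite S \<and> module.span scale S = UNIV)"

text \<open>The free module with (finite) basis B: functions vanishing outside B.\<close>
definition fvec :: "'i set \<Rightarrow> ('i \<Rightarrow> 'a::comm_ring_1) set" where
  "fvec B = {v. \<forall>x. x \<notin> B \<longrightarrow> v x = 0}"

text \<open>The map R^B -> R^B' given by the matrix D (entry D y x for y in B', x in B).\<close>
definition dapp :: "'i set \<Rightarrow> 'i set \<Rightarrow> ('i \<Rightarrow> 'i \<Rightarrow> 'a::comm_ring_1) \<Rightarrow> ('i \<Rightarrow> 'a) \<Rightarrow> ('i \<Rightarrow> 'a)" where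
  "dapp B B' D v = (\<lambda>y. if y \<in> B' then (\<Sum>x\<in>B. D y x * v x) else 0)"

text \<open>A complex of finite free modules F_t with basis B t and differential
  d_t : F_t -> F_(t-1) with matrix D t (t >= 1), together with an augmentation
  aug : F_0 -> N (N the whole type 'n), is a free resolution of N.\<close>
definition is_free_resolution ::
  "('a::comm_ring_1 \<Rightarrow> 'n::ab_group_add \<Rightarrow> 'n) \<Rightarrow> (nat \<Rightarrow> 'i set) \<Rightarrow> (nat \<Rightarrow> 'i \<Rightarrow> 'i \<Rightarrow> 'a)
     \<Rightarrow> (('i \<Rightarrow> 'a) \<Rightarrow> 'n) \<Rightarrow> bool" where
  "is_free_resolution scale B D aug \<longleftrightarrow>
     (\<forall>t. finite (B t)) \<and>
     (\<forall>t\<ge>1. {v \<in> fvec (B t). dapp (B t) (B (t - 1)) (D t) v = (\<lambda>_. 0)}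
              = dapp (B (Suc t)) (B t) (D (Suc t)) ` fvec (B (Suc t))) \<and>
     (\<forall>u\<in>fvec (B 0). \<forall>v\<in>fvec (B 0). aug (\<lambda>x. u x + v x) = aug u + aug v) \<and>
     (\<forall>r. \<forall>v\<in>fvec (B 0). aug (\<lambda>x. r * v x) = scale r (aug v)) \<and>
     aug ` fvec (B 0) = UNIV \<and>
     {v \<in> fvec (B 0). aug v = 0} = dapp (B 1) (B 0) (D 1) ` fvec (B 1)"

text \<open>Minimality: the image of every differential lies in m times the target,
  i.e. all matrix entries lie in m.\<close>
definition minimal_cx :: "'a::comm_ring_1 set \<Rightarrow> (nat \<Rightarrow> 'i set) \<Rightarrow> (nat \<Rightarrow> 'i \<Rightarrow> 'i \<Rightarrow> 'a) \<Rightarrow> bool" where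
  "minimal_cx m B D \<longleftrightarrow> (\<forall>t\<ge>1. \<forall>y\<in>B (t - 1). \<forall>x\<in>B t. D t y x \<in> m)"

definition betti :: "('a::comm_ring_1 \<Rightarrow> 'n::ab_group_add \<Rightarrow> 'n) \<Rightarrow> 'a set \<Rightarrow> nat \<Rightarrow> nat" where
  "betti scale m t = (THE n. \<exists>(B :: nat \<Rightarrow> nat set) D aug.
      is_free_resolution scale B D aug \<and> minimal_cx m B D \<and> card (B t) = n)"

text \<open>Projective dimension (over a local ring f.g. projectives are free):
  least length of a finite free resolution.\<close>
definition pdim :: "('a::comm_ring_1 \<Rightarrow> 'n::ab_group_add \<Rightarrow> 'n) \<Rightarrow> nat" where
  "pdim scale = (LEAST n. \<exists>(B :: nat \<Rightarrow> nat set) D aug.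
      is_free_resolution scale B D aug \<and> (\<forall>i>n. B i = {}))"

definition delta :: "'x \<Rightarrow> 'x \<Rightarrow> 'a::comm_ring_1" where
  "delta xs = (\<lambda>z. if z = xs then 1 else 0)"

definition sym_gens :: "('a::comm_ring_1 \<Rightarrow> 'm::ab_group_add \<Rightarrow> 'm) \<Rightarrow> nat \<Rightarrow> ('m list \<Rightarrow> 'a) set" where
  "sym_gens scaleM j =
     {(\<lambda>z. delta (xs @ (x + y) # ys) z - delta (xs @ x # ys) z - delta (xs @ y # ys) z)
        | xs ys x y. length xs + length ys + 1 = j}
   \<union> {(\<lambda>z. delta (xs @ scaleM r x # ys) z - r * delta (xs @ x # ys) z)
        | xs ys r x. length xs + length ys + 1 = j}
   \<union> {(\<lambda>z. delta xs z - delta ys z) | xs ys. length xs = j \<and> mset xs = mset ys}"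

definition sym_rel :: "('a::comm_ring_1 \<Rightarrow> 'm::ab_group_add \<Rightarrow> 'm) \<Rightarrow> nat \<Rightarrow> ('m list \<Rightarrow> 'a) set" where
  "sym_rel scaleM j = {f. \<exists>G c. finite G \<and> G \<subseteq> sym_gens scaleM j \<and> f = (\<lambda>z. \<Sum>g\<in>G. c g * g z)}"

text \<open>(N, sigma) is the j-th symmetric power of M: sigma is j-multilinear and symmetric,
  and the induced map from the free module on M^j (formal finite combinations of
  j-tuples) to N is surjective with kernel exactly the submodule generated by the
  multilinearity and symmetry relations.\<close>
definition is_sym_power :: "('a::comm_ring_1 \<Rightarrow> 'm::ab_group_add \<Rightarrow> 'm) \<Rightarrow> ('a \<Rightarrow> 'n::ab_group_add \<Rightarrow> 'n)
     \<Rightarrow> nat \<Rightarrow> ('m list \<Rightarrow> 'n) \<Rightarrow> bool" where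
  "is_sym_power scaleM scaleN j \<sigma> \<longleftrightarrow>
     (\<forall>xs ys x y. length xs + length ys + 1 = j \<longrightarrow>
        \<sigma> (xs @ (x + y) # ys) = \<sigma> (xs @ x # ys) + \<sigma> (xs @ y # ys)) \<and>
     (\<forall>xs ys r x. length xs + length ys + 1 = j \<longrightarrow>
        \<sigma> (xs @ scaleM r x # ys) = scaleN r (\<sigma> (xs @ x # ys))) \<and>
     (\<forall>xs ys. length xs = j \<and> mset xs = mset ys \<longrightarrow> \<sigma> xs = \<sigma> ys) \<and>
     (\<forall>y. \<exists>f. finite {xs. f xs \<noteq> 0} \<and> (\<forall>xs. f xs \<noteq> 0 \<longrightarrow> length xs = j) \<and>
        y = (\<Sum>xs | f xs \<noteq> 0. scaleN (f xs) (\<sigma> xs))) \<and>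
     (\<forall>f. finite {xs. f xs \<noteq> 0} \<and> (\<forall>xs. f xs \<noteq> 0 \<longrightarrow> length xs = j) \<and>
        (\<Sum>xs | f xs \<noteq> 0. scaleN (f xs) (\<sigma> xs)) = 0 \<longrightarrow> f \<in> sym_rel scaleM j)"

text \<open>Basis of (S_j F)_t for F with bases {..<b i}, i = 0..p: lists L of length p+1,
  L!i a multiset over {..<b i} of size a_i (a divided power monomial for even i,
  a strictly increasing wedge monomial, i.e. a set, for odd i), sum a_i = j,
  sum i*a_i = t.\<close>
definition SjB :: "nat \<Rightarrow> (nat \<Rightarrow> nat) \<Rightarrow> nat \<Rightarrow> nat \<Rightarrow> nat multiset list set" where
  "SjB p b j t = {L. length L = Suc p \<and>
      (\<forall>i\<le>p. set_mset (L ! i) \<subseteq> {..<b i} \<and> (odd i \<longrightarrow> (\<forall>x. count (L ! i) x \<le> 1))) \<and>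
      (\<Sum>i\<le>p. size (L ! i)) = j \<and> (\<Sum>i\<le>p. i * size (L ! i)) = t}"

text \<open>Coefficient of the component i (moving one factor from F_(i+1) to F_i), applied to
  basis element L, in the direction of removing l from L!(i+1) and inserting m into L!i.\<close>
definition SjComp :: "(nat \<Rightarrow> nat \<Rightarrow> nat \<Rightarrow> 'a::comm_ring_1) \<Rightarrow> nat \<Rightarrow> nat multiset list
     \<Rightarrow> nat \<Rightarrow> nat \<Rightarrow> 'a" where
  "SjComp \<phi> i L l m =
     (-1) ^ (\<Sum>k<i. if odd k then size (L ! k) else 0) *
     (if odd i then
        (if m \<in># L ! i then 0
         else (-1) ^ card {k \<in> set_mset (L ! i). k < m} * \<phi> (Suc i) m l)
      else
        (-1) ^ Suc (card {k \<in> set_mset (L ! Suc i). k < l}) *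
        of_nat (count (L ! i) m + 1) * \<phi> (Suc i) m l)"

definition SjD :: "nat \<Rightarrow> (nat \<Rightarrow> nat) \<Rightarrow> (nat \<Rightarrow> nat \<Rightarrow> nat \<Rightarrow> 'a::comm_ring_1)
     \<Rightarrow> nat \<Rightarrow> nat multiset list \<Rightarrow> nat multiset list \<Rightarrow> 'a" where
  "SjD p b \<phi> t L' L =
     (\<Sum>i<p. \<Sum>l\<in>set_mset (L ! Suc i). \<Sum>m<b i.
        if L' = L[Suc i := L ! Suc i - {#l#}, i := L ! i + {#m#}] then SjComp \<phi> i L l m else 0)"

definition tuples :: "nat \<Rightarrow> nat \<Rightarrow> nat \<Rightarrow> (nat \<Rightarrow> nat) set" where
  "tuples p j t = {a. (\<forall>i>p. a i = 0) \<and> (\<Sum>i\<le>p. a i) = j \<and> (\<Sum>i\<le>p. i * a i) = t}"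

end

theory Submission
  imports Defs "HOL-Library.Countable" "HOL-Library.FuncSet"
begin


lemma id_0: "is_ideal J \<Longrightarrow> 0 \<in> J" by (simp add: is_ideal_def)
lemma id_add: "is_ideal J \<Longrightarrow> x \<in> J \<Longrightarrow> y \<in> J \<Longrightarrow> x + y \<in> J" by (simp add: is_ideal_def)
lemma id_multl: "is_ideal J \<Longrightarrow> x \<in> J \<Longrightarrow> r * x \<in> J" by (simp add: is_ideal_def)
lemma id_multr: "is_ideal J \<Longrightarrow> x \<in> J \<Longrightarrow> x * r \<in> J" by (metis id_multl mult.commute)
lemma id_uminus: "is_ideal J \<Longrightarrow> x \<in> J \<Longrightarrow> - x \<in> J" by (metis id_multl mult_minus1)
lemma id_diff: "is_ideal J \<Longrightarrow> x \<in> J \<Longrightarrow> y \<in> J \<Longrightarrow> x - y \<in> J"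
  by (metis diff_conv_add_uminus id_add id_uminus)
lemma id_sum: "is_ideal J \<Longrightarrow> (\<And>x. x \<in> S \<Longrightarrow> f x \<in> J) \<Longrightarrow> sum f S \<in> J"
  by (induction S rule: infinite_finite_induct) (auto simp: id_0 id_add)

lemma cong_add: "is_ideal J \<Longrightarrow> a - b \<in> J \<Longrightarrow> c - d \<in> J \<Longrightarrow> (a + c) - (b + d) \<in> J"
proof -
  assume "is_ideal J" "a - b \<in> J" "c - d \<in> J"
  then have "(a - b) + (c - d) \<in> J" by (rule id_add)
  then show ?thesis by (simp add: algebra_simps)
qed
lemma cong_mult: "is_ideal J \<Longrightarrow> a - b \<in> J \<Longrightarrow> c - d \<in> J \<Longrightarrow> (a * c) - (b * d) \<in> J"
proof -
  assume "is_ideal J" "a - b \<in> J" "c - d \<in> J"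
  then have "a * (c - d) + (a - b) * d \<in> J" by (simp add: id_add id_multl id_multr)
  then show ?thesis by (simp add: algebra_simps)
qed
lemma cong_sum: "is_ideal J \<Longrightarrow> (\<And>x. x \<in> S \<Longrightarrow> f x - g x \<in> J) \<Longrightarrow> sum f S - sum g S \<in> J"
  by (induction S rule: infinite_finite_induct) (auto simp: id_0 cong_add)
lemma cong_prod: "is_ideal J \<Longrightarrow> (\<And>x. x \<in> S \<Longrightarrow> f x - g x \<in> J) \<Longrightarrow> prod f S - prod g S \<in> J"
  by (induction S rule: infinite_finite_induct) (auto simp: id_0 cong_mult)

lemma ideal_one_notin:
  assumes J: "is_ideal J" and one: "1 \<notin> J" and s: "s \<in> J" and d: "s - 1 \<in> J"
  shows False
proof -
  have "s - (s - 1) \<in> J" by (rule id_diff[OF J s d])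
  then show False using one by simp
qed

lemma ibn:
  fixes J :: "'a::comm_ring_1 set"
  assumes J: "is_ideal J" and one: "1 \<notin> J" and inv: "\<And>x. x \<notin> J \<Longrightarrow> \<exists>u. u * x - 1 \<in> J"
    and fA: "finite A" and fC: "finite C"
    and c: "\<And>x y. x \<in> A \<Longrightarrow> y \<in> A \<Longrightarrow> (\<Sum>z\<in>C. P y z * Q z x) - (if y = x then 1 else 0) \<in> J"
  shows "card A \<le> card C"
  using fA fC c
proof (induction "card C" arbitrary: A C P Q)
  case 0
  show ?case
  proof (cases "A = {}")
    case False
    then obtain a where a: "a \<in> A" by blast
    have "C = {}" using 0 by simp
    then have "(\<Sum>z\<in>C. P a z * Q z a) - 1 \<in> J" using "0.prems"(3)[OF a a] by simp
    then show ?thesis using ideal_one_notin[OF J one id_0[OF J]] \<open>C = {}\<close> by simp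
  qed simp
next
  case (Suc n)
  show ?case
  proof (cases "A = {}")
    case False
    then obtain a where a: "a \<in> A" by blast
    have "\<exists>c0\<in>C. P a c0 * Q c0 a \<notin> J"
    proof (rule ccontr)
      assume "\<not> (\<exists>c0\<in>C. P a c0 * Q c0 a \<notin> J)"
      then have "(\<Sum>z\<in>C. P a z * Q z a) \<in> J" by (intro id_sum[OF J]) blast
      moreover have "(\<Sum>z\<in>C. P a z * Q z a) - 1 \<in> J" using Suc.prems(3)[OF a a] by simp
      ultimately show False using ideal_one_notin[OF J one] by blast
    qed
    then obtain c0 where c0: "c0 \<in> C" and pq: "P a c0 * Q c0 a \<notin> J" by blast
    have "P a c0 \<notin> J" using pq id_multr[OF J] by blast
    then obtain u where u: "u * P a c0 - 1 \<in> J" using inv by blast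
    define P' where "P' = (\<lambda>y c. if c = c0 then P y c0 else P y c - P y c0 * u * P a c)"
    define Q' where "Q' = (\<lambda>c x. if c = c0 then Q c0 x + u * (\<Sum>c'\<in>C - {c0}. P a c' * Q c' x) else Q c x)"
    have key: "(\<Sum>c\<in>C. P' y c * Q' c x) = (\<Sum>c\<in>C. P y c * Q c x)" for x y
    proof -
      have "(\<Sum>c\<in>C. P' y c * Q' c x) = P' y c0 * Q' c0 x + (\<Sum>c\<in>C - {c0}. P' y c * Q' c x)"
        using sum.remove[OF Suc.prems(2) c0] by simp
      also have "(\<Sum>c\<in>C - {c0}. P' y c * Q' c x) = (\<Sum>c\<in>C - {c0}. P y c * Q c x - P y c0 * u * (P a c * Q c x))"
        by (intro sum.cong) (auto simp: P'_def Q'_def algebra_simps)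
      also have "\<dots> = (\<Sum>c\<in>C - {c0}. P y c * Q c x) - P y c0 * u * (\<Sum>c\<in>C - {c0}. P a c * Q c x)"
        by (simp add: sum_subtractf sum_distrib_left)
      also have "P' y c0 * Q' c0 x = P y c0 * Q c0 x + P y c0 * u * (\<Sum>c\<in>C - {c0}. P a c * Q c x)"
        by (simp add: P'_def Q'_def algebra_simps)
      finally have "(\<Sum>c\<in>C. P' y c * Q' c x) = P y c0 * Q c0 x + (\<Sum>c\<in>C - {c0}. P y c * Q c x)"
        by simp
      also have "\<dots> = (\<Sum>c\<in>C. P y c * Q c x)" using sum.remove[OF Suc.prems(2) c0, of "\<lambda>c. P y c * Q c x"] by simp
      finally show ?thesis .
    qed
    have i: "P' a c \<in> J" if "c \<in> C - {c0}" for c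
    proof -
      have "P' a c = - (P a c * (u * P a c0 - 1))" using that by (simp add: P'_def algebra_simps)
      then show ?thesis using id_uminus[OF J id_multl[OF J u]] by simp
    qed
    have ii: "Q' c0 x \<in> J" if x: "x \<in> A - {a}" for x
    proof -
      have "(\<Sum>c\<in>C. P a c * Q c x) \<in> J" using Suc.prems(3)[of x a] x a by auto
      then have "(\<Sum>c\<in>C. P' a c * Q' c x) \<in> J" by (simp only: key)
      moreover have "(\<Sum>c\<in>C. P' a c * Q' c x) = P' a c0 * Q' c0 x + (\<Sum>c\<in>C - {c0}. P' a c * Q' c x)"
        using sum.remove[OF Suc.prems(2) c0] by simp
      moreover have "(\<Sum>c\<in>C - {c0}. P' a c * Q' c x) \<in> J"
        by (intro id_sum[OF J] id_multr[OF J] i)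
      ultimately have "P' a c0 * Q' c0 x \<in> J"
        by (metis add_diff_cancel_right' id_diff[OF J])
      then have pq': "P a c0 * Q' c0 x \<in> J" by (simp add: P'_def)
      have "u * (P a c0 * Q' c0 x) - (u * P a c0 - 1) * Q' c0 x \<in> J"
        by (rule id_diff[OF J id_multl[OF J pq'] id_multr[OF J u]])
      moreover have eq: "u * (P a c0 * Q' c0 x) - (u * P a c0 - 1) * Q' c0 x = Q' c0 x"
        by (simp add: algebra_simps)
      ultimately show ?thesis by (simp only: eq)
    qed
    have iii: "(\<Sum>z\<in>C - {c0}. P' y z * Q' z x) - (if y = x then 1 else 0) \<in> J"
      if x: "x \<in> A - {a}" and y: "y \<in> A - {a}" for x y
    proof -
      have e: "(\<Sum>z\<in>C - {c0}. P' y z * Q' z x) - (if y = x then 1 else 0)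
          = ((\<Sum>z\<in>C. P y z * Q z x) - (if y = x then 1 else 0)) - P' y c0 * Q' c0 x"
        using sum.remove[OF Suc.prems(2) c0, of "\<lambda>z. P' y z * Q' z x"] key[of y x] by (simp add: algebra_simps)
      show ?thesis unfolding e
        by (rule id_diff[OF J Suc.prems(3)]) (use x y ii in \<open>auto intro: id_multl[OF J]\<close>)
    qed
    have "card (A - {a}) \<le> card (C - {c0})"
      by (rule Suc.hyps(1)[of "C - {c0}" "A - {a}" P' Q'])
         (use Suc.hyps(2) Suc.prems c0 iii in auto)
    moreover have "card (A - {a}) = card A - 1" using a Suc.prems(1) by simp
    moreover have "card (C - {c0}) = card C - 1" using c0 Suc.prems(2) by simp
    moreover have "card A > 0" using a Suc.prems(1) card_gt_0_iff by blast
    moreover have "card C > 0" using Suc.hyps(2) by simp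
    ultimately show ?thesis by linarith
  qed simp
qed



definition gapp :: "'i set \<Rightarrow> 'j set \<Rightarrow> ('j \<Rightarrow> 'i \<Rightarrow> 'a::comm_ring_1) \<Rightarrow> ('i \<Rightarrow> 'a) \<Rightarrow> ('j \<Rightarrow> 'a)" where
  "gapp B B' D v = (\<lambda>y. if y \<in> B' then (\<Sum>x\<in>B. D y x * v x) else 0)"

lemma dapp_gapp: "dapp = gapp"
  by (intro ext) (simp add: dapp_def gapp_def)

definition colv :: "'j set \<Rightarrow> ('j \<Rightarrow> 'i \<Rightarrow> 'a::comm_ring_1) \<Rightarrow> 'i \<Rightarrow> 'j \<Rightarrow> 'a" where
  "colv B' M x = (\<lambda>y. if y \<in> B' then M y x else 0)"

definition mmul :: "'j set \<Rightarrow> ('k \<Rightarrow> 'j \<Rightarrow> 'a::comm_ring_1) \<Rightarrow> ('j \<Rightarrow> 'i \<Rightarrow> 'a) \<Rightarrow> 'k \<Rightarrow> 'i \<Rightarrow> 'a" where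
  "mmul B' M2 M1 = (\<lambda>z x. \<Sum>y\<in>B'. M2 z y * M1 y x)"

lemma gapp_fvec: "gapp B B' M v \<in> fvec B'"
  by (simp add: gapp_def fvec_def)

lemma fvecD: "v \<in> fvec B \<Longrightarrow> x \<notin> B \<Longrightarrow> v x = 0"
  by (simp add: fvec_def)

lemma delta_fvec: "x \<in> B \<Longrightarrow> delta x \<in> fvec B"
  by (auto simp: fvec_def delta_def)

lemma gapp_delta: "x \<in> B \<Longrightarrow> finite B \<Longrightarrow> gapp B B' M (delta x) = colv B' M x"
  by (auto simp: gapp_def colv_def delta_def if_distrib cong: if_cong)

lemma gapp_gapp: "gapp B' B'' M2 (gapp B B' M1 v) = gapp B B'' (mmul B' M2 M1) v"
proof
  fix z
  show "gapp B' B'' M2 (gapp B B' M1 v) z = gapp B B'' (mmul B' M2 M1) v z"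
  proof (cases "z \<in> B''")
    case True
    have "(\<Sum>y\<in>B'. M2 z y * gapp B B' M1 v y) = (\<Sum>y\<in>B'. M2 z y * (\<Sum>x\<in>B. M1 y x * v x))"
      by (intro sum.cong) (auto simp: gapp_def)
    also have "\<dots> = (\<Sum>y\<in>B'. \<Sum>x\<in>B. M2 z y * M1 y x * v x)"
      by (simp add: sum_distrib_left mult.assoc)
    also have "\<dots> = (\<Sum>x\<in>B. \<Sum>y\<in>B'. M2 z y * M1 y x * v x)" by (rule sum.swap)
    also have "\<dots> = (\<Sum>x\<in>B. mmul B' M2 M1 z x * v x)"
      by (simp add: mmul_def sum_distrib_right)
    finally show ?thesis using True by (simp add: gapp_def)
  qed (simp add: gapp_def)
qed

lemma gapp_cong: "(\<And>x y. x \<in> B \<Longrightarrow> y \<in> B' \<Longrightarrow> M1 y x = M2 y x) \<Longrightarrow> gapp B B' M1 = gapp B B' M2"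
  by (intro ext) (auto simp: gapp_def intro!: sum.cong)

lemma gapp_ext_basis:
  assumes "finite B" "\<And>x. x \<in> B \<Longrightarrow> gapp B B' M1 (delta x) = gapp B B' M2 (delta x)"
  shows "gapp B B' M1 = gapp B B' M2"
proof (rule gapp_cong)
  fix x y assume "x \<in> B" "y \<in> B'"
  then have "colv B' M1 x y = colv B' M2 x y" using assms gapp_delta by metis
  with \<open>y \<in> B'\<close> show "M1 y x = M2 y x" by (simp add: colv_def)
qed

lemma gapp_add_vec: "gapp B B' M (\<lambda>x. u x + v x) = (\<lambda>y. gapp B B' M u y + gapp B B' M v y)"
  by (auto simp: gapp_def sum.distrib distrib_left)
lemma gapp_diff_vec: "gapp B B' M (\<lambda>x. u x - v x) = (\<lambda>y. gapp B B' M u y - gapp B B' M v y)"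
  by (auto simp: gapp_def sum_subtractf right_diff_distrib)
lemma gapp_zero: "gapp B B' M (\<lambda>_. 0) = (\<lambda>_. 0)"
  by (auto simp: gapp_def)
lemma gapp_scale: "gapp B B' M (\<lambda>x. r * v x) = (\<lambda>y. r * gapp B B' M v y)"
  by (auto simp: gapp_def sum_distrib_left mult.left_commute)
lemma gapp_add_mat: "gapp B B' (\<lambda>y x. M1 y x + M2 y x) v = (\<lambda>y. gapp B B' M1 v y + gapp B B' M2 v y)"
  by (auto simp: gapp_def sum.distrib distrib_right)
lemma gapp_diff_mat: "gapp B B' (\<lambda>y x. M1 y x - M2 y x) v = (\<lambda>y. gapp B B' M1 v y - gapp B B' M2 v y)"
  by (auto simp: gapp_def sum_subtractf left_diff_distrib)

lemma gapp_id: "v \<in> fvec B \<Longrightarrow> finite B \<Longrightarrow> gapp B B (\<lambda>y x. if y = x then 1 else 0) v = v"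
proof
  fix y assume v: "v \<in> fvec B" and "finite B"
  have "(\<Sum>x\<in>B. (if y = x then 1 else 0) * v x) = (\<Sum>x\<in>B. if y = x then v x else 0)"
    by (intro sum.cong) auto
  then show "gapp B B (\<lambda>y x. if y = x then 1 else 0) v y = v y"
    using \<open>finite B\<close> v by (auto simp: gapp_def fvec_def)
qed

lemma gapp_in_ideal: "is_ideal J \<Longrightarrow> (\<And>x y. y \<in> B' \<Longrightarrow> x \<in> B \<Longrightarrow> M y x \<in> J) \<Longrightarrow> gapp B B' M v y \<in> J"
  by (auto simp: gapp_def id_0 intro!: id_sum id_multr)
lemma gapp_in_ideal2: "is_ideal J \<Longrightarrow> (\<And>x. x \<in> B \<Longrightarrow> v x \<in> J) \<Longrightarrow> gapp B B' M v y \<in> J"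
  by (auto simp: gapp_def id_0 intro!: id_sum id_multl)

definition lin_aug :: "('a::comm_ring_1 \<Rightarrow> 'n::ab_group_add \<Rightarrow> 'n) \<Rightarrow> 'i set \<Rightarrow> (('i \<Rightarrow> 'a) \<Rightarrow> 'n) \<Rightarrow> bool" where
  "lin_aug scale B aug \<longleftrightarrow> (\<forall>u\<in>fvec B. \<forall>v\<in>fvec B. aug (\<lambda>x. u x + v x) = aug u + aug v) \<and>
     (\<forall>r. \<forall>v\<in>fvec B. aug (\<lambda>x. r * v x) = scale r (aug v))"

lemma aug_add: "lin_aug scale B aug \<Longrightarrow> u \<in> fvec B \<Longrightarrow> v \<in> fvec B \<Longrightarrow> aug (\<lambda>x. u x + v x) = aug u + aug v"
  by (simp add: lin_aug_def)
lemma aug_scale: "lin_aug scale B aug \<Longrightarrow> v \<in> fvec B \<Longrightarrow> aug (\<lambda>x. r * v x) = scale r (aug v)"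
  by (simp add: lin_aug_def)

lemma aug_zero: assumes "lin_aug scale B aug" shows "aug (\<lambda>_. 0) = 0"
proof -
  have z: "(\<lambda>_. 0) \<in> fvec B" by (simp add: fvec_def)
  have "aug (\<lambda>x. (0::'a) + 0) = aug (\<lambda>_. 0) + aug (\<lambda>_. 0)"
    using aug_add[OF assms z z] by simp
  then show ?thesis by simp
qed

lemma aug_sum:
  assumes la: "lin_aug scale B aug" and fin: "finite S" and w: "\<And>z. z \<in> S \<Longrightarrow> w z \<in> fvec B"
  shows "aug (\<lambda>y. \<Sum>z\<in>S. c z * w z y) = (\<Sum>z\<in>S. scale (c z) (aug (w z)))"
  using fin w
proof (induction S rule: finite_induct)
  case empty
  then show ?case using aug_zero[OF la] by simp
next
  case (insert a S)
  have f1: "(\<lambda>y. c a * w a y) \<in> fvec B" using insert.prems by (auto simp: fvec_def)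
  have f2: "(\<lambda>y. \<Sum>z\<in>S. c z * w z y) \<in> fvec B" using insert.prems by (auto simp: fvec_def)
  have "aug (\<lambda>y. \<Sum>z\<in>insert a S. c z * w z y) = aug (\<lambda>y. c a * w a y + (\<Sum>z\<in>S. c z * w z y))"
    using insert.hyps by simp
  also have "\<dots> = aug (\<lambda>y. c a * w a y) + aug (\<lambda>y. \<Sum>z\<in>S. c z * w z y)"
    using aug_add[OF la f1 f2] by simp
  also have "aug (\<lambda>y. c a * w a y) = scale (c a) (aug (w a))"
    using aug_scale[OF la, of "w a" "c a"] insert.prems by simp
  finally show ?case using insert by simp
qed

lemma gapp_as_sum: "finite B \<Longrightarrow> gapp B B' M v = (\<lambda>y. \<Sum>x\<in>B. v x * colv B' M x y)"
  by (auto simp: gapp_def colv_def mult.commute)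

lemma colv_fvec: "colv B' M x \<in> fvec B'" by (simp add: colv_def fvec_def)

lemma aug_gapp:
  assumes la: "lin_aug scale B' aug" and fin: "finite B"
  shows "aug (gapp B B' M v) = (\<Sum>x\<in>B. scale (v x) (aug (colv B' M x)))"
  unfolding gapp_as_sum[OF fin] by (rule aug_sum[OF la fin colv_fvec])

lemma aug_expand:
  assumes la: "lin_aug scale B aug" and fin: "finite B" and v: "v \<in> fvec B"
  shows "aug v = (\<Sum>x\<in>B. scale (v x) (aug (delta x)))"
proof -
  have "aug v = aug (gapp B B (\<lambda>y x. if y = x then 1 else 0) v)" using gapp_id[OF v fin] by simp
  also have "\<dots> = (\<Sum>x\<in>B. scale (v x) (aug (colv B (\<lambda>y x. if y = x then 1 else 0) x)))"
    by (rule aug_gapp[OF la fin])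
  also have "\<dots> = (\<Sum>x\<in>B. scale (v x) (aug (delta x)))"
  proof (intro sum.cong refl)
    fix x assume "x \<in> B"
    then have e: "colv B (\<lambda>y x. if y = x then 1 else 0) x = delta x" by (auto simp: colv_def delta_def fun_eq_iff)
    show "scale (v x) (aug (colv B (\<lambda>y x. if y = x then 1 else 0) x)) = scale (v x) (aug (delta x))" by (simp only: e)
  qed
  finally show ?thesis .
qed



definition dd :: "(nat \<Rightarrow> 'i set) \<Rightarrow> (nat \<Rightarrow> 'i \<Rightarrow> 'i \<Rightarrow> 'a::comm_ring_1) \<Rightarrow> nat \<Rightarrow> ('i \<Rightarrow> 'a) \<Rightarrow> ('i \<Rightarrow> 'a)" where
  "dd B D t = gapp (B (Suc t)) (B t) (D (Suc t))"

lemma dd_fvec: "dd B D t v \<in> fvec (B t)" by (simp add: dd_def gapp_fvec)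

lemma aug_diff: assumes "lin_aug scale B aug" "u \<in> fvec B" "v \<in> fvec B"
  shows "aug (\<lambda>x. u x - v x) = aug u - aug v"
proof -
  have "(\<lambda>x. u x - v x) \<in> fvec B" using assms by (auto simp: fvec_def)
  then have "aug (\<lambda>x. (u x - v x) + v x) = aug (\<lambda>x. u x - v x) + aug v"
    using aug_add[OF assms(1) _ assms(3)] by blast
  then show ?thesis by (simp add: algebra_simps)
qed

locale fres =
  fixes scale :: "'a::comm_ring_1 \<Rightarrow> 'n::ab_group_add \<Rightarrow> 'n"
    and B :: "nat \<Rightarrow> 'i set" and D :: "nat \<Rightarrow> 'i \<Rightarrow> 'i \<Rightarrow> 'a" and aug :: "('i \<Rightarrow> 'a) \<Rightarrow> 'n"
  assumes res: "is_free_resolution scale B D aug"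
begin

lemma res': "is_free_resolution scale B D aug" by (rule res)

lemma R_ker0: "{v \<in> fvec (B 0). aug v = 0} = gapp (B 1) (B 0) (D 1) ` fvec (B 1)"
  using res unfolding is_free_resolution_def dapp_gapp by (elim conjE) assumption
lemma R_ex: "\<forall>t\<ge>1. {v \<in> fvec (B t). gapp (B t) (B (t - 1)) (D t) v = (\<lambda>_. 0)}
              = gapp (B (Suc t)) (B t) (D (Suc t)) ` fvec (B (Suc t))"
  using res unfolding is_free_resolution_def dapp_gapp by (elim conjE) assumption
lemma fin: "finite (B t)" using res by (simp add: is_free_resolution_def)

lemma lin: "lin_aug scale (B 0) aug" using res by (simp add: is_free_resolution_def lin_aug_def)

lemma surj: "\<exists>w\<in>fvec (B 0). aug w = y"
proof -
  have "aug ` fvec (B 0) = UNIV" using res unfolding is_free_resolution_def by simp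
  then have "y \<in> aug ` fvec (B 0)" by simp
  then show ?thesis by (auto simp del: dd_def)
qed

lemma cx0: "v \<in> fvec (B (Suc 0)) \<Longrightarrow> aug (dd B D 0 v) = 0"
proof -
  assume v: "v \<in> fvec (B (Suc 0))"
  have "dd B D 0 v \<in> gapp (B 1) (B 0) (D 1) ` fvec (B 1)" using v by (simp add: dd_def)
  then have "dd B D 0 v \<in> {v \<in> fvec (B 0). aug v = 0}" by (simp only: R_ker0)
  then show ?thesis by (simp only: mem_Collect_eq)
qed

lemma ex0: "w \<in> fvec (B 0) \<Longrightarrow> aug w = 0 \<Longrightarrow> \<exists>u\<in>fvec (B (Suc 0)). dd B D 0 u = w"
proof -
  assume "w \<in> fvec (B 0)" "aug w = 0"
  then have "w \<in> {v \<in> fvec (B 0). aug v = 0}" by (simp only: mem_Collect_eq)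
  then have "w \<in> gapp (B 1) (B 0) (D 1) ` fvec (B 1)" by (simp only: R_ker0)
  then show ?thesis by (auto simp: dd_def)
qed

lemma exs: "{v \<in> fvec (B (Suc t)). dd B D t v = (\<lambda>_. 0)} = dd B D (Suc t) ` fvec (B (Suc (Suc t)))"
proof -
  have "Suc t \<ge> 1" by simp
  then have "{v \<in> fvec (B (Suc t)). gapp (B (Suc t)) (B (Suc t - 1)) (D (Suc t)) v = (\<lambda>_. 0)}
              = gapp (B (Suc (Suc t))) (B (Suc t)) (D (Suc (Suc t))) ` fvec (B (Suc (Suc t)))"
    using R_ex by blast
  then show ?thesis by (simp add: dd_def)
qed

lemma cx: "v \<in> fvec (B (Suc (Suc t))) \<Longrightarrow> dd B D t (dd B D (Suc t) v) = (\<lambda>_. 0)"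
proof -
  assume "v \<in> fvec (B (Suc (Suc t)))"
  then have "dd B D (Suc t) v \<in> dd B D (Suc t) ` fvec (B (Suc (Suc t)))" by (rule imageI)
  then have "dd B D (Suc t) v \<in> {v \<in> fvec (B (Suc t)). dd B D t v = (\<lambda>_. 0)}" by (simp only: exs)
  then show ?thesis by (simp only: mem_Collect_eq)
qed

lemma ex: "w \<in> fvec (B (Suc t)) \<Longrightarrow> dd B D t w = (\<lambda>_. 0) \<Longrightarrow> \<exists>u\<in>fvec (B (Suc (Suc t))). dd B D (Suc t) u = w"
proof -
  assume "w \<in> fvec (B (Suc t))" "dd B D t w = (\<lambda>_. 0)"
  then have "w \<in> {v \<in> fvec (B (Suc t)). dd B D t v = (\<lambda>_. 0)}" by simp
  then have "w \<in> dd B D (Suc t) ` fvec (B (Suc (Suc t)))" by (simp only: exs)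
  then show ?thesis by (auto simp del: dd_def)
qed

end

locale cmp = F: fres scale BF DF eF + G: fres scale BG DG eG
  for scale :: "'a::comm_ring_1 \<Rightarrow> 'n::ab_group_add \<Rightarrow> 'n"
    and BF :: "nat \<Rightarrow> 'i set" and DF and eF
    and BG :: "nat \<Rightarrow> 'j set" and DG and eG
begin

primrec lm :: "nat \<Rightarrow> 'j \<Rightarrow> 'i \<Rightarrow> 'a" where
  "lm 0 = (\<lambda>y x. (SOME w. w \<in> fvec (BG 0) \<and> eG w = eF (delta x)) y)"
| "lm (Suc t) = (\<lambda>y x. (SOME w. w \<in> fvec (BG (Suc t)) \<and>
      dd BG DG t w = gapp (BF t) (BG t) (lm t) (dd BF DF t (delta x))) y)"

definition spec :: "nat \<Rightarrow> bool" where
  "spec t = (\<forall>x\<in>BF t. colv (BG t) (lm t) x \<in> fvec (BG t) \<and>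
     (case t of 0 \<Rightarrow> eG (colv (BG 0) (lm 0) x) = eF (delta x)
      | Suc s \<Rightarrow> dd BG DG s (colv (BG (Suc s)) (lm (Suc s)) x) = gapp (BF s) (BG s) (lm s) (dd BF DF s (delta x))))"

lemma colv_SOME: "c x \<in> fvec B' \<Longrightarrow> colv B' (\<lambda>y x. c x y) x = c x"
  by (auto simp: colv_def fvec_def)

lemma colv_some: "w \<in> fvec B' \<Longrightarrow> colv B' (\<lambda>y x'. (if x' = x then w else W x') y) x = w"
  by (auto simp: colv_def fvec_def)

lemma C0: assumes "spec 0" "v \<in> fvec (BF 0)"
  shows "eG (gapp (BF 0) (BG 0) (lm 0) v) = eF v"
proof -
  have "eG (gapp (BF 0) (BG 0) (lm 0) v) = (\<Sum>x\<in>BF 0. scale (v x) (eG (colv (BG 0) (lm 0) x)))"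
    by (rule aug_gapp[OF G.lin F.fin])
  also have "\<dots> = (\<Sum>x\<in>BF 0. scale (v x) (eF (delta x)))"
    using assms(1) by (intro sum.cong refl) (simp add: spec_def)
  also have "\<dots> = eF v" using aug_expand[OF F.lin F.fin assms(2)] by simp
  finally show ?thesis .
qed

lemma CS: assumes "spec (Suc s)"
  shows "dd BG DG s (gapp (BF (Suc s)) (BG (Suc s)) (lm (Suc s)) v) = gapp (BF s) (BG s) (lm s) (dd BF DF s v)"
proof -
  have "gapp (BF (Suc s)) (BG s) (mmul (BG (Suc s)) (DG (Suc s)) (lm (Suc s)))
       = gapp (BF (Suc s)) (BG s) (mmul (BF s) (lm s) (DF (Suc s)))"
  proof (rule gapp_ext_basis[OF F.fin])
    fix x assume x: "x \<in> BF (Suc s)"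
    have "gapp (BF (Suc s)) (BG s) (mmul (BG (Suc s)) (DG (Suc s)) (lm (Suc s))) (delta x)
        = dd BG DG s (gapp (BF (Suc s)) (BG (Suc s)) (lm (Suc s)) (delta x))"
      by (simp add: dd_def gapp_gapp)
    also have "\<dots> = dd BG DG s (colv (BG (Suc s)) (lm (Suc s)) x)" using x F.fin gapp_delta by metis
    also have "\<dots> = gapp (BF s) (BG s) (lm s) (dd BF DF s (delta x))" using assms x by (simp add: spec_def)
    also have "\<dots> = gapp (BF (Suc s)) (BG s) (mmul (BF s) (lm s) (DF (Suc s))) (delta x)"
      by (simp add: dd_def gapp_gapp)
    finally show "gapp (BF (Suc s)) (BG s) (mmul (BG (Suc s)) (DG (Suc s)) (lm (Suc s))) (delta x) =
         gapp (BF (Suc s)) (BG s) (mmul (BF s) (lm s) (DF (Suc s))) (delta x)" .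
  qed
  then show ?thesis by (simp add: dd_def gapp_gapp)
qed

lemma spec_all: "spec t"
proof (induction t)
  case 0
  show ?case unfolding spec_def
  proof
    fix x assume x: "x \<in> BF 0"
    define P where "P = (\<lambda>w. w \<in> fvec (BG 0) \<and> eG w = eF (delta x))"
    have "\<exists>w. P w" using G.surj unfolding P_def by blast
    then have Pw: "P (SOME w. P w)" by (rule someI_ex)
    then have Pw1: "(SOME w. P w) \<in> fvec (BG 0)" and Pw2: "eG (SOME w. P w) = eF (delta x)"
      unfolding P_def by auto
    define c where "c = (\<lambda>x'. SOME w. w \<in> fvec (BG 0) \<and> eG w = eF (delta x'))"
    have lmc: "lm 0 = (\<lambda>y x. c x y)" by (simp add: c_def)
    have cx: "c x = (SOME w. P w)" by (simp add: c_def P_def)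
    have "colv (BG 0) (lm 0) x = c x"
      unfolding lmc by (rule colv_SOME) (simp only: cx Pw1)
    then have e: "colv (BG 0) (lm 0) x = (SOME w. P w)" by (simp only: cx)
    show "colv (BG 0) (lm 0) x \<in> fvec (BG 0) \<and> (case 0 of 0 \<Rightarrow> eG (colv (BG 0) (lm 0) x) = eF (delta x)
      | Suc s \<Rightarrow> dd BG DG s (colv (BG (Suc s)) (lm (Suc s)) x) = gapp (BF s) (BG s) (lm s) (dd BF DF s (delta x)))"
      unfolding e nat.case using Pw1 Pw2 by blast
  qed
next
  case (Suc t)
  show ?case unfolding spec_def
  proof
    fix x assume x: "x \<in> BF (Suc t)"
    define z where "z = gapp (BF t) (BG t) (lm t) (dd BF DF t (delta x))"
    define P where "P = (\<lambda>w. w \<in> fvec (BG (Suc t)) \<and> dd BG DG t w = z)"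
    have zf: "z \<in> fvec (BG t)" by (simp add: z_def gapp_fvec)
    have dx: "delta x \<in> fvec (BF (Suc t))" using x by (rule delta_fvec)
    have "\<exists>w. P w"
    proof (cases t)
      case 0
      have "eG z = eF (dd BF DF 0 (delta x))" using C0[OF Suc.IH[unfolded 0] dd_fvec[of BF DF 0 "delta x"]] 0 by (simp add: z_def)
      also have "\<dots> = 0" using F.cx0 dx 0 by simp
      finally have "\<exists>u\<in>fvec (BG (Suc 0)). dd BG DG 0 u = z" by (rule G.ex0[OF zf[unfolded 0]])
      then show ?thesis unfolding P_def 0 by blast
    next
      case (Suc s)
      have "dd BG DG s z = gapp (BF s) (BG s) (lm s) (dd BF DF s (dd BF DF (Suc s) (delta x)))"
        using CS[OF Suc.IH[unfolded Suc]] Suc by (simp add: z_def)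
      also have "\<dots> = gapp (BF s) (BG s) (lm s) (\<lambda>_. 0)" by (simp only: F.cx[OF dx[unfolded Suc]])
      also have "\<dots> = (\<lambda>_. 0)" by (rule gapp_zero)
      finally have "\<exists>u\<in>fvec (BG (Suc (Suc s))). dd BG DG (Suc s) u = z" by (rule G.ex[OF zf[unfolded Suc]])
      then show ?thesis unfolding P_def Suc by blast
    qed
    then have Pw: "P (SOME w. P w)" by (rule someI_ex)
    then have Pw1: "(SOME w. P w) \<in> fvec (BG (Suc t))" and Pw2: "dd BG DG t (SOME w. P w) = z"
      unfolding P_def by auto
    define c where "c = (\<lambda>x'. SOME w. w \<in> fvec (BG (Suc t)) \<and> dd BG DG t w = gapp (BF t) (BG t) (lm t) (dd BF DF t (delta x')))"
    have lmc: "lm (Suc t) = (\<lambda>y x. c x y)" by (simp add: c_def)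
    have cx: "c x = (SOME w. P w)" by (simp add: c_def P_def z_def)
    have "colv (BG (Suc t)) (lm (Suc t)) x = c x"
      unfolding lmc by (rule colv_SOME) (simp only: cx Pw1)
    then have e: "colv (BG (Suc t)) (lm (Suc t)) x = (SOME w. P w)" by (simp only: cx)
    show "colv (BG (Suc t)) (lm (Suc t)) x \<in> fvec (BG (Suc t)) \<and> (case Suc t of 0 \<Rightarrow> eG (colv (BG 0) (lm 0) x) = eF (delta x)
      | Suc s \<Rightarrow> dd BG DG s (colv (BG (Suc s)) (lm (Suc s)) x) = gapp (BF s) (BG s) (lm s) (dd BF DF s (delta x)))"
      unfolding e nat.case using Pw1 Pw2 unfolding z_def by blast
  qed
qed

lemma lift0: "v \<in> fvec (BF 0) \<Longrightarrow> eG (gapp (BF 0) (BG 0) (lm 0) v) = eF v"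
  using C0 spec_all by blast

lemma liftS: "dd BG DG s (gapp (BF (Suc s)) (BG (Suc s)) (lm (Suc s)) v) = gapp (BF s) (BG s) (lm s) (dd BF DF s v)"
  using CS spec_all by blast

end



lemma colv_SOME2: "c x \<in> fvec B' \<Longrightarrow> colv B' (\<lambda>y x. c x y) x = c x"
  by (auto simp: colv_def fvec_def)

locale hmt = fres scale B D aug
  for scale :: "'a::comm_ring_1 \<Rightarrow> 'n::ab_group_add \<Rightarrow> 'n"
    and B :: "nat \<Rightarrow> 'i set" and D and aug +
  fixes u :: "nat \<Rightarrow> 'i \<Rightarrow> 'i \<Rightarrow> 'a"
  assumes U0: "\<And>v. v \<in> fvec (B 0) \<Longrightarrow> aug (gapp (B 0) (B 0) (u 0) v) = 0"
    and US: "\<And>t v. v \<in> fvec (B (Suc t)) \<Longrightarrow>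
       dd B D t (gapp (B (Suc t)) (B (Suc t)) (u (Suc t)) v) = gapp (B t) (B t) (u t) (dd B D t v)"
begin

primrec hm :: "nat \<Rightarrow> 'i \<Rightarrow> 'i \<Rightarrow> 'a" where
  "hm 0 = (\<lambda>y x. (SOME w. w \<in> fvec (B (Suc 0)) \<and> dd B D 0 w = gapp (B 0) (B 0) (u 0) (delta x)) y)"
| "hm (Suc t) = (\<lambda>y x. (SOME w. w \<in> fvec (B (Suc (Suc t))) \<and>
      dd B D (Suc t) w = (\<lambda>z. gapp (B (Suc t)) (B (Suc t)) (u (Suc t)) (delta x) z
                            - gapp (B t) (B (Suc t)) (hm t) (dd B D t (delta x)) z)) y)"

declare hm.simps[simp del]

definition hspec :: "nat \<Rightarrow> bool" where
  "hspec t = (\<forall>x\<in>B t. colv (B (Suc t)) (hm t) x \<in> fvec (B (Suc t)) \<and>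
     (case t of 0 \<Rightarrow> dd B D 0 (colv (B (Suc 0)) (hm 0) x) = gapp (B 0) (B 0) (u 0) (delta x)
      | Suc s \<Rightarrow> dd B D (Suc s) (colv (B (Suc (Suc s))) (hm (Suc s)) x) =
          (\<lambda>z. gapp (B (Suc s)) (B (Suc s)) (u (Suc s)) (delta x) z
             - gapp (B s) (B (Suc s)) (hm s) (dd B D s (delta x)) z)))"

lemma H0: assumes "hspec 0"
  shows "gapp (B 0) (B 0) (u 0) v = dd B D 0 (gapp (B 0) (B (Suc 0)) (hm 0) v)"
proof -
  have "gapp (B 0) (B 0) (u 0) = gapp (B 0) (B 0) (mmul (B (Suc 0)) (D (Suc 0)) (hm 0))"
  proof (rule gapp_ext_basis[OF fin])
    fix x assume x: "x \<in> B 0"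
    have "gapp (B 0) (B 0) (mmul (B (Suc 0)) (D (Suc 0)) (hm 0)) (delta x)
        = dd B D 0 (gapp (B 0) (B (Suc 0)) (hm 0) (delta x))"
      by (simp add: dd_def gapp_gapp)
    also have "\<dots> = dd B D 0 (colv (B (Suc 0)) (hm 0) x)" using x fin gapp_delta by metis
    also have "\<dots> = gapp (B 0) (B 0) (u 0) (delta x)" using assms x by (simp add: hspec_def)
    finally show "gapp (B 0) (B 0) (u 0) (delta x) = gapp (B 0) (B 0) (mmul (B (Suc 0)) (D (Suc 0)) (hm 0)) (delta x)" by simp
  qed
  then show ?thesis by (simp add: dd_def gapp_gapp)
qed

lemma HS: assumes "hspec (Suc s)"
  shows "gapp (B (Suc s)) (B (Suc s)) (u (Suc s)) v =
    (\<lambda>z. dd B D (Suc s) (gapp (B (Suc s)) (B (Suc (Suc s))) (hm (Suc s)) v) z + gapp (B s) (B (Suc s)) (hm s) (dd B D s v) z)"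
proof -
  let ?M = "\<lambda>y x. mmul (B (Suc (Suc s))) (D (Suc (Suc s))) (hm (Suc s)) y x + mmul (B s) (hm s) (D (Suc s)) y x"
  have e: "\<And>v. gapp (B (Suc s)) (B (Suc s)) ?M v =
    (\<lambda>z. dd B D (Suc s) (gapp (B (Suc s)) (B (Suc (Suc s))) (hm (Suc s)) v) z + gapp (B s) (B (Suc s)) (hm s) (dd B D s v) z)"
    by (simp only: gapp_add_mat dd_def gapp_gapp)
  have "gapp (B (Suc s)) (B (Suc s)) (u (Suc s)) = gapp (B (Suc s)) (B (Suc s)) ?M"
  proof (rule gapp_ext_basis[OF fin])
    fix x assume x: "x \<in> B (Suc s)"
    have e1: "gapp (B (Suc s)) (B (Suc s)) ?M (delta x) =
      (\<lambda>z. dd B D (Suc s) (gapp (B (Suc s)) (B (Suc (Suc s))) (hm (Suc s)) (delta x)) z + gapp (B s) (B (Suc s)) (hm s) (dd B D s (delta x)) z)"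
      by (rule e)
    have e2: "gapp (B (Suc s)) (B (Suc (Suc s))) (hm (Suc s)) (delta x) = colv (B (Suc (Suc s))) (hm (Suc s)) x"
      using x fin gapp_delta by metis
    have e3: "dd B D (Suc s) (colv (B (Suc (Suc s))) (hm (Suc s)) x) =
          (\<lambda>z. gapp (B (Suc s)) (B (Suc s)) (u (Suc s)) (delta x) z
             - gapp (B s) (B (Suc s)) (hm s) (dd B D s (delta x)) z)" using assms x by (simp add: hspec_def)
    show "gapp (B (Suc s)) (B (Suc s)) (u (Suc s)) (delta x) = gapp (B (Suc s)) (B (Suc s)) ?M (delta x)"
      unfolding e1 e2 e3 by simp
  qed
  then show ?thesis using e by simp
qed

lemma hspec_all: "hspec t"
proof (induction t)
  case 0
  show ?case unfolding hspec_def
  proof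
    fix x assume x: "x \<in> B 0"
    define P where "P = (\<lambda>w. w \<in> fvec (B (Suc 0)) \<and> dd B D 0 w = gapp (B 0) (B 0) (u 0) (delta x))"
    have "\<exists>w. P w"
    proof -
      have "aug (gapp (B 0) (B 0) (u 0) (delta x)) = 0" using U0 delta_fvec[OF x] by blast
      then have "\<exists>w\<in>fvec (B (Suc 0)). dd B D 0 w = gapp (B 0) (B 0) (u 0) (delta x)"
        by (rule ex0[OF gapp_fvec])
      then show ?thesis unfolding P_def by blast
    qed
    then have Pw: "P (SOME w. P w)" by (rule someI_ex)
    then have Pw1: "(SOME w. P w) \<in> fvec (B (Suc 0))" and Pw2: "dd B D 0 (SOME w. P w) = gapp (B 0) (B 0) (u 0) (delta x)"
      unfolding P_def by auto
    define c where "c = (\<lambda>x'. SOME w. w \<in> fvec (B (Suc 0)) \<and> dd B D 0 w = gapp (B 0) (B 0) (u 0) (delta x'))"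
    have lmc: "hm 0 = (\<lambda>y x. c x y)" by (simp add: c_def hm.simps)
    have cx: "c x = (SOME w. P w)" by (simp add: c_def P_def)
    have "colv (B (Suc 0)) (hm 0) x = c x"
      unfolding lmc by (rule colv_SOME2) (simp only: cx Pw1)
    then have e: "colv (B (Suc 0)) (hm 0) x = (SOME w. P w)" by (simp only: cx)
    show "colv (B (Suc 0)) (hm 0) x \<in> fvec (B (Suc 0)) \<and> (case 0 of 0 \<Rightarrow> dd B D 0 (colv (B (Suc 0)) (hm 0) x) = gapp (B 0) (B 0) (u 0) (delta x)
      | Suc s \<Rightarrow> dd B D (Suc s) (colv (B (Suc (Suc s))) (hm (Suc s)) x) =
          (\<lambda>z. gapp (B (Suc s)) (B (Suc s)) (u (Suc s)) (delta x) z
             - gapp (B s) (B (Suc s)) (hm s) (dd B D s (delta x)) z))"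
      unfolding e nat.case using Pw1 Pw2 by blast
  qed
next
  case (Suc t)
  show ?case unfolding hspec_def
  proof
    fix x assume x: "x \<in> B (Suc t)"
    define z where "z = (\<lambda>z. gapp (B (Suc t)) (B (Suc t)) (u (Suc t)) (delta x) z
                            - gapp (B t) (B (Suc t)) (hm t) (dd B D t (delta x)) z)"
    define P where "P = (\<lambda>w. w \<in> fvec (B (Suc (Suc t))) \<and> dd B D (Suc t) w = z)"
    have zf: "z \<in> fvec (B (Suc t))" by (simp add: z_def fvec_def gapp_def)
    have dx: "delta x \<in> fvec (B (Suc t))" using x by (rule delta_fvec)
    have dz: "dd B D t z = (\<lambda>y. gapp (B t) (B t) (u t) (dd B D t (delta x)) y
        - dd B D t (gapp (B t) (B (Suc t)) (hm t) (dd B D t (delta x))) y)"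
      unfolding z_def dd_def gapp_diff_vec using US[OF dx] by (simp add: dd_def)
    have "dd B D t z = (\<lambda>_. 0)"
    proof (cases t)
      case 0
      show ?thesis unfolding dz using H0[OF Suc.IH[unfolded 0]] 0 by simp
    next
      case (Suc s)
      have "gapp (B t) (B t) (u t) (dd B D t (delta x)) =
          (\<lambda>z. dd B D (Suc s) (gapp (B (Suc s)) (B (Suc (Suc s))) (hm (Suc s)) (dd B D t (delta x))) z
             + gapp (B s) (B (Suc s)) (hm s) (dd B D s (dd B D t (delta x))) z)"
        unfolding Suc by (rule HS[OF Suc.IH[unfolded Suc]])
      also have "dd B D s (dd B D t (delta x)) = (\<lambda>_. 0)" unfolding Suc by (rule cx[OF dx[unfolded Suc]])
      finally show ?thesis unfolding dz using Suc by (simp add: gapp_zero)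
    qed
    then have "\<exists>w\<in>fvec (B (Suc (Suc t))). dd B D (Suc t) w = z" by (rule ex[OF zf])
    then have "\<exists>w. P w" unfolding P_def by blast
    then have Pw: "P (SOME w. P w)" by (rule someI_ex)
    then have Pw1: "(SOME w. P w) \<in> fvec (B (Suc (Suc t)))" and Pw2: "dd B D (Suc t) (SOME w. P w) = z"
      unfolding P_def by auto
    define c where "c = (\<lambda>x'. SOME w. w \<in> fvec (B (Suc (Suc t))) \<and>
      dd B D (Suc t) w = (\<lambda>z. gapp (B (Suc t)) (B (Suc t)) (u (Suc t)) (delta x') z
                            - gapp (B t) (B (Suc t)) (hm t) (dd B D t (delta x')) z))"
    have lmc: "hm (Suc t) = (\<lambda>y x. c x y)" by (simp add: c_def hm.simps)
    have cx: "c x = (SOME w. P w)" by (simp add: c_def P_def z_def)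
    have "colv (B (Suc (Suc t))) (hm (Suc t)) x = c x"
      unfolding lmc by (rule colv_SOME2) (simp only: cx Pw1)
    then have e: "colv (B (Suc (Suc t))) (hm (Suc t)) x = (SOME w. P w)" by (simp only: cx)
    show "colv (B (Suc (Suc t))) (hm (Suc t)) x \<in> fvec (B (Suc (Suc t))) \<and> (case Suc t of 0 \<Rightarrow> dd B D 0 (colv (B (Suc 0)) (hm 0) x) = gapp (B 0) (B 0) (u 0) (delta x)
      | Suc s \<Rightarrow> dd B D (Suc s) (colv (B (Suc (Suc s))) (hm (Suc s)) x) =
          (\<lambda>z. gapp (B (Suc s)) (B (Suc s)) (u (Suc s)) (delta x) z
             - gapp (B s) (B (Suc s)) (hm s) (dd B D s (delta x)) z))"
      unfolding e nat.case using Pw1 Pw2 unfolding z_def by blast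
  qed
qed

lemma u_in_ideal:
  assumes J: "is_ideal J" and mc: "minimal_cx J B D" and x: "x \<in> B t" and y: "y \<in> B t"
  shows "u t y x \<in> J"
proof -
  have Din: "\<And>s a b. a \<in> B s \<Longrightarrow> b \<in> B (Suc s) \<Longrightarrow> D (Suc s) a b \<in> J"
  proof -
    fix s a b assume "a \<in> B s" "b \<in> B (Suc s)"
    then show "D (Suc s) a b \<in> J" using mc[unfolded minimal_cx_def, rule_format, of "Suc s" a b] by simp
  qed
  have ddJ: "\<And>s w a. dd B D s w a \<in> J"
    unfolding dd_def by (rule gapp_in_ideal[OF J]) (simp add: Din)
  have "u t y x = colv (B t) (u t) x y" using y by (simp add: colv_def)
  also have "\<dots> = gapp (B t) (B t) (u t) (delta x) y" by (simp only: gapp_delta[OF x fin])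
  finally have e: "u t y x = gapp (B t) (B t) (u t) (delta x) y" .
  show ?thesis
  proof (cases t)
    case 0
    show ?thesis unfolding e unfolding 0 H0[OF hspec_all] by (rule ddJ)
  next
    case (Suc s)
    show ?thesis unfolding e unfolding Suc HS[OF hspec_all]
      by (rule id_add[OF J ddJ gapp_in_ideal2[OF J ddJ]])
  qed
qed

end

lemma card_le_minres:
  fixes scale :: "'a::comm_ring_1 \<Rightarrow> 'n::ab_group_add \<Rightarrow> 'n"
    and BF :: "nat \<Rightarrow> 'i set" and BG :: "nat \<Rightarrow> 'j set"
  assumes rF: "is_free_resolution scale BF DF eF" and rG: "is_free_resolution scale BG DG eG"
    and mF: "minimal_cx J BF DF" and J: "is_ideal J" and one: "1 \<notin> J"
    and inv: "\<And>x. x \<notin> J \<Longrightarrow> \<exists>u. u * x - 1 \<in> J"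
  shows "card (BF t) \<le> card (BG t)"
proof -
  interpret FG: cmp scale BF DF eF BG DG eG by (unfold_locales; fact)
  interpret GF: cmp scale BG DG eG BF DF eF by (unfold_locales; fact)
  define u where "u = (\<lambda>t y x. mmul (BG t) (GF.lm t) (FG.lm t) y x - (if y = x then 1 else (0::'a)))"
  have ue: "\<And>t v. v \<in> fvec (BF t) \<Longrightarrow> gapp (BF t) (BF t) (u t) v =
      (\<lambda>y. gapp (BG t) (BF t) (GF.lm t) (gapp (BF t) (BG t) (FG.lm t) v) y - v y)"
    unfolding u_def gapp_diff_mat gapp_gapp using FG.F.fin by (simp add: gapp_id)
  interpret H: hmt scale BF DF eF u
  proof
    fix v :: "'i \<Rightarrow> 'a" assume v: "v \<in> fvec (BF 0)"
    have f0: "gapp (BF 0) (BG 0) (FG.lm 0) v \<in> fvec (BG 0)" by (rule gapp_fvec)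
    have g0: "gapp (BG 0) (BF 0) (GF.lm 0) (gapp (BF 0) (BG 0) (FG.lm 0) v) \<in> fvec (BF 0)" by (rule gapp_fvec)
    show "eF (gapp (BF 0) (BF 0) (u 0) v) = 0"
      unfolding ue[OF v] aug_diff[OF FG.F.lin g0 v] GF.lift0[OF f0] FG.lift0[OF v] by simp
  next
    fix t and v :: "'i \<Rightarrow> 'a" assume v: "v \<in> fvec (BF (Suc t))"
    have dv: "dd BF DF t v \<in> fvec (BF t)" by (rule dd_fvec)
    show "dd BF DF t (gapp (BF (Suc t)) (BF (Suc t)) (u (Suc t)) v) = gapp (BF t) (BF t) (u t) (dd BF DF t v)"
    proof -
      have "dd BF DF t (gapp (BF (Suc t)) (BF (Suc t)) (u (Suc t)) v) =
        dd BF DF t (\<lambda>y. gapp (BG (Suc t)) (BF (Suc t)) (GF.lm (Suc t)) (gapp (BF (Suc t)) (BG (Suc t)) (FG.lm (Suc t)) v) y - v y)"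
        by (simp only: ue[OF v])
      also have "\<dots> = (\<lambda>y. dd BF DF t (gapp (BG (Suc t)) (BF (Suc t)) (GF.lm (Suc t)) (gapp (BF (Suc t)) (BG (Suc t)) (FG.lm (Suc t)) v)) y - dd BF DF t v y)"
        unfolding dd_def by (rule gapp_diff_vec)
      also have "dd BF DF t (gapp (BG (Suc t)) (BF (Suc t)) (GF.lm (Suc t)) (gapp (BF (Suc t)) (BG (Suc t)) (FG.lm (Suc t)) v))
          = gapp (BG t) (BF t) (GF.lm t) (dd BG DG t (gapp (BF (Suc t)) (BG (Suc t)) (FG.lm (Suc t)) v))"
        by (rule GF.liftS)
      also have "dd BG DG t (gapp (BF (Suc t)) (BG (Suc t)) (FG.lm (Suc t)) v) = gapp (BF t) (BG t) (FG.lm t) (dd BF DF t v)"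
        by (rule FG.liftS)
      also have "(\<lambda>y. gapp (BG t) (BF t) (GF.lm t) (gapp (BF t) (BG t) (FG.lm t) (dd BF DF t v)) y - dd BF DF t v y)
          = gapp (BF t) (BF t) (u t) (dd BF DF t v)"
        by (simp only: ue[OF dv])
      finally show ?thesis .
    qed
  qed
  show ?thesis
  proof (rule ibn[OF J one inv FG.F.fin FG.G.fin])
    fix x y assume x: "x \<in> BF t" and y: "y \<in> BF t"
    show "(\<Sum>z\<in>BG t. GF.lm t y z * FG.lm t z x) - (if y = x then 1 else 0) \<in> J"
      using H.u_in_ideal[OF J mF x y] by (simp add: u_def mmul_def)
  qed
qed



lemma betti_eq:
  fixes scale :: "'a::comm_ring_1 \<Rightarrow> 'n::ab_group_add \<Rightarrow> 'n" and B :: "nat \<Rightarrow> nat set"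
  assumes r: "is_free_resolution scale B D aug" and m: "minimal_cx J B D"
    and J: "is_ideal J" and one: "1 \<notin> J" and inv: "\<And>x. x \<notin> J \<Longrightarrow> \<exists>u. u * x - 1 \<in> J"
  shows "betti scale J t = card (B t)"
  unfolding betti_def
proof (rule the_equality)
  show "\<exists>B' D' aug'. is_free_resolution scale (B' :: nat \<Rightarrow> nat set) D' aug' \<and> minimal_cx J B' D' \<and> card (B' t) = card (B t)"
    using r m by blast
next
  fix n assume "\<exists>B' D' aug'. is_free_resolution scale (B' :: nat \<Rightarrow> nat set) D' aug' \<and> minimal_cx J B' D' \<and> card (B' t) = n"
  then obtain B' D' aug' where r': "is_free_resolution scale (B' :: nat \<Rightarrow> nat set) D' aug'"
    and m': "minimal_cx J B' D'" and n: "card (B' t) = n" by blast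
  have "card (B' t) \<le> card (B t)" by (rule card_le_minres[OF r' r m' J one inv])
  moreover have "card (B t) \<le> card (B' t)" by (rule card_le_minres[OF r r' m J one inv])
  ultimately show "n = card (B t)" using n by simp
qed

section \<open>Transport along an injection of the index type into nat\<close>

definition tPhi :: "('i \<Rightarrow> nat) \<Rightarrow> (nat \<Rightarrow> 'a) \<Rightarrow> ('i \<Rightarrow> 'a)" where
  "tPhi \<iota> w = (\<lambda>x. w (\<iota> x))"

definition tPsi :: "('i \<Rightarrow> nat) \<Rightarrow> 'i set \<Rightarrow> ('i \<Rightarrow> 'a::zero) \<Rightarrow> (nat \<Rightarrow> 'a)" where
  "tPsi \<iota> B v = (\<lambda>n. if n \<in> \<iota> ` B then v (inv_into UNIV \<iota> n) else 0)"

context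
  fixes \<iota> :: "'i \<Rightarrow> nat"
  assumes inj: "inj \<iota>"
begin

lemma tPhi_fvec: "w \<in> fvec (\<iota> ` B) \<Longrightarrow> tPhi \<iota> w \<in> fvec B"
  using inj by (auto simp: fvec_def tPhi_def inj_image_mem_iff)

lemma tPsi_fvec: "tPsi \<iota> B v \<in> fvec (\<iota> ` B)"
  by (auto simp: fvec_def tPsi_def)

lemma tPhi_tPsi: "v \<in> fvec B \<Longrightarrow> tPhi \<iota> (tPsi \<iota> B v) = v"
  using inj by (auto simp: fvec_def tPhi_def tPsi_def inj_image_mem_iff fun_eq_iff)

lemma tPsi_tPhi: "w \<in> fvec (\<iota> ` B) \<Longrightarrow> tPsi \<iota> B (tPhi \<iota> w) = w"
  using inj by (auto simp: fvec_def tPhi_def tPsi_def fun_eq_iff)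

lemma tPhi_zero: "tPhi \<iota> (\<lambda>_. 0) = (\<lambda>_. 0)" by (simp add: tPhi_def)
lemma tPsi_zero: "tPsi \<iota> B (\<lambda>_. 0) = (\<lambda>_. 0)" by (simp add: tPsi_def fun_eq_iff)

lemma tPhi_gapp:
  assumes "finite B"
  shows "tPhi \<iota> (gapp (\<iota> ` B) (\<iota> ` B') (\<lambda>y x. D (inv_into UNIV \<iota> y) (inv_into UNIV \<iota> x)) w) = gapp B B' D (tPhi \<iota> w)"
proof
  fix x
  have ij: "inj_on \<iota> B" by (rule inj_on_subset[OF inj subset_UNIV])
  have "(\<Sum>n\<in>\<iota> ` B. D (inv_into UNIV \<iota> (\<iota> x)) (inv_into UNIV \<iota> n) * w n)
      = (\<Sum>z\<in>B. D (inv_into UNIV \<iota> (\<iota> x)) (inv_into UNIV \<iota> (\<iota> z)) * w (\<iota> z))"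
    using sum.reindex[OF ij, of "\<lambda>n. D (inv_into UNIV \<iota> (\<iota> x)) (inv_into UNIV \<iota> n) * w n"] by (simp only: comp_def)
  also have "\<dots> = (\<Sum>z\<in>B. D x z * w (\<iota> z))" by (simp only: inv_f_f[OF inj])
  finally have e: "(\<Sum>n\<in>\<iota> ` B. D (inv_into UNIV \<iota> (\<iota> x)) (inv_into UNIV \<iota> n) * w n) = (\<Sum>z\<in>B. D x z * w (\<iota> z))" .
  have m: "(\<iota> x \<in> \<iota> ` B') = (x \<in> B')" by (rule inj_image_mem_iff[OF inj])
  show "tPhi \<iota> (gapp (\<iota> ` B) (\<iota> ` B') (\<lambda>y x. D (inv_into UNIV \<iota> y) (inv_into UNIV \<iota> x)) w) x = gapp B B' D (tPhi \<iota> w) x"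
    unfolding tPhi_def gapp_def m e by (rule refl)
qed

lemma tPhi_inj: "w \<in> fvec (\<iota> ` B) \<Longrightarrow> w' \<in> fvec (\<iota> ` B) \<Longrightarrow> tPhi \<iota> w = tPhi \<iota> w' \<Longrightarrow> w = w'"
proof -
  assume a: "w \<in> fvec (\<iota> ` B)" "w' \<in> fvec (\<iota> ` B)" "tPhi \<iota> w = tPhi \<iota> w'"
  have "w = tPsi \<iota> B (tPhi \<iota> w)" using tPsi_tPhi[OF a(1)] by simp
  also have "\<dots> = tPsi \<iota> B (tPhi \<iota> w')" using a(3) by simp
  also have "\<dots> = w'" using tPsi_tPhi[OF a(2)] by simp
  finally show "w = w'" .
qed

lemma transport_res:
  fixes scale :: "'a::comm_ring_1 \<Rightarrow> 'n::ab_group_add \<Rightarrow> 'n" and B :: "nat \<Rightarrow> 'i set"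
  assumes r: "is_free_resolution scale B D aug"
  shows "is_free_resolution scale (\<lambda>t. \<iota> ` B t) (\<lambda>t y x. D t (inv_into UNIV \<iota> y) (inv_into UNIV \<iota> x)) (\<lambda>w. aug (tPhi \<iota> w))"
proof -
  interpret fres scale B D aug by (rule fres.intro[OF r])
  let ?B = "\<lambda>t. \<iota> ` B t" and ?D = "\<lambda>t y x. D t (inv_into UNIV \<iota> y) (inv_into UNIV \<iota> x)" and ?a = "\<lambda>w. aug (tPhi \<iota> w)"
  have TG: "tPhi \<iota> (gapp (?B t) (?B s) (?D t) w) = gapp (B t) (B s) (D t) (tPhi \<iota> w)" for t s w
    by (rule tPhi_gapp[OF fin])
  have ex_gen: "{v \<in> fvec (?B t). gapp (?B t) (?B s) (?D t) v = (\<lambda>_. 0)} = gapp (?B t') (?B t) (?D t') ` fvec (?B t')" (is "?L = ?R")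
    if e: "{v \<in> fvec (B t). gapp (B t) (B s) (D t) v = (\<lambda>_. 0)} = gapp (B t') (B t) (D t') ` fvec (B t')"
    for t s t'
  proof (rule equalityI)
    show "?L \<subseteq> ?R"
    proof
    fix w assume "w \<in> {v \<in> fvec (?B t). gapp (?B t) (?B s) (?D t) v = (\<lambda>_. 0)}"
    then have w: "w \<in> fvec (?B t)" and w0: "gapp (?B t) (?B s) (?D t) w = (\<lambda>_. 0)" by auto
    have "gapp (B t) (B s) (D t) (tPhi \<iota> w) = tPhi \<iota> (gapp (?B t) (?B s) (?D t) w)" by (rule TG[symmetric])
    also have "\<dots> = (\<lambda>_. 0)" by (simp only: w0 tPhi_zero)
    finally have "gapp (B t) (B s) (D t) (tPhi \<iota> w) = (\<lambda>_. 0)" .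
    then have "tPhi \<iota> w \<in> {v \<in> fvec (B t). gapp (B t) (B s) (D t) v = (\<lambda>_. 0)}" using tPhi_fvec[OF w] by simp
    then obtain v where v: "v \<in> fvec (B t')" and vw: "tPhi \<iota> w = gapp (B t') (B t) (D t') v" using e by auto
    have eq: "tPhi \<iota> (gapp (?B t') (?B t) (?D t') (tPsi \<iota> (B t') v)) = tPhi \<iota> w"
      using TG[of t' t "tPsi \<iota> (B t') v"] tPhi_tPsi[OF v] vw by simp
    have "gapp (?B t') (?B t) (?D t') (tPsi \<iota> (B t') v) = w"
      by (rule tPhi_inj[OF gapp_fvec w eq])
    then have "w = gapp (?B t') (?B t) (?D t') (tPsi \<iota> (B t') v)" by simp
    then show "w \<in> gapp (?B t') (?B t) (?D t') ` fvec (?B t')" using tPsi_fvec by blast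
    qed
  next
    show "?R \<subseteq> ?L"
    proof
    fix w assume "w \<in> gapp (?B t') (?B t) (?D t') ` fvec (?B t')"
    then obtain v where v: "v \<in> fvec (?B t')" and wv: "w = gapp (?B t') (?B t) (?D t') v" by auto
    have "tPhi \<iota> w = gapp (B t') (B t) (D t') (tPhi \<iota> v)" using TG[of t' t v] wv by simp
    then have "tPhi \<iota> w \<in> {v \<in> fvec (B t). gapp (B t) (B s) (D t) v = (\<lambda>_. 0)}"
      using e tPhi_fvec[OF v] by auto
    then have "gapp (B t) (B s) (D t) (tPhi \<iota> w) = (\<lambda>_. 0)" by simp
    then have eq: "tPhi \<iota> (gapp (?B t) (?B s) (?D t) w) = tPhi \<iota> (\<lambda>_. 0)" using TG[of t s w] by (simp add: tPhi_def)
    have z: "(\<lambda>_. 0) \<in> fvec (?B s)" by (simp add: fvec_def)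
    have "gapp (?B t) (?B s) (?D t) w = (\<lambda>_. 0)"
      by (rule tPhi_inj[OF gapp_fvec z eq])
    then show "w \<in> {v \<in> fvec (?B t). gapp (?B t) (?B s) (?D t) v = (\<lambda>_. 0)}" using wv gapp_fvec by auto
    qed
  qed
  have A1: "\<forall>t. finite (?B t)" using fin by simp
  have A2: "\<forall>t\<ge>1. {v \<in> fvec (?B t). dapp (?B t) (?B (t - 1)) (?D t) v = (\<lambda>_. 0)}
              = dapp (?B (Suc t)) (?B t) (?D (Suc t)) ` fvec (?B (Suc t))"
  proof (intro allI impI)
    fix t :: nat assume t1: "1 \<le> t"
    have "{v \<in> fvec (B t). gapp (B t) (B (t - 1)) (D t) v = (\<lambda>_. 0)}
              = gapp (B (Suc t)) (B t) (D (Suc t)) ` fvec (B (Suc t))"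
      using R_ex[rule_format, OF t1] .
    then show "{v \<in> fvec (?B t). dapp (?B t) (?B (t - 1)) (?D t) v = (\<lambda>_. 0)}
              = dapp (?B (Suc t)) (?B t) (?D (Suc t)) ` fvec (?B (Suc t))"
      unfolding dapp_gapp by (rule ex_gen)
  qed
  have A3: "\<forall>u\<in>fvec (?B 0). \<forall>v\<in>fvec (?B 0). ?a (\<lambda>x. u x + v x) = ?a u + ?a v"
  proof (intro ballI)
    fix u v :: "nat \<Rightarrow> 'a" assume "u \<in> fvec (?B 0)" "v \<in> fvec (?B 0)"
    then show "?a (\<lambda>x. u x + v x) = ?a u + ?a v"
      using aug_add[OF lin tPhi_fvec tPhi_fvec] by (simp add: tPhi_def)
  qed
  have A4: "\<forall>r. \<forall>v\<in>fvec (?B 0). ?a (\<lambda>x. r * v x) = scale r (?a v)"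
  proof (intro allI ballI)
    fix r and v :: "nat \<Rightarrow> 'a" assume "v \<in> fvec (?B 0)"
    then show "?a (\<lambda>x. r * v x) = scale r (?a v)"
      using aug_scale[OF lin tPhi_fvec] by (simp add: tPhi_def)
  qed
  have A5: "?a ` fvec (?B 0) = UNIV"
  proof -
    have "y \<in> ?a ` fvec (?B 0)" for y :: 'n
    proof -
      obtain w where w: "w \<in> fvec (B 0)" "aug w = y" using surj by blast
      have "?a (tPsi \<iota> (B 0) w) = y" by (simp only: tPhi_tPsi[OF w(1)] w(2))
      then show "y \<in> ?a ` fvec (?B 0)" using tPsi_fvec by blast
    qed
    then show ?thesis by blast
  qed
  have A6: "{v \<in> fvec (?B 0). ?a v = 0} = dapp (?B 1) (?B 0) (?D 1) ` fvec (?B 1)" (is "?L = ?R")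
  proof (rule equalityI)
    show "?L \<subseteq> ?R"
    proof
      fix w assume "w \<in> {v \<in> fvec (?B 0). ?a v = 0}"
      then have w: "w \<in> fvec (?B 0)" and w0: "aug (tPhi \<iota> w) = 0" by auto
      then have "tPhi \<iota> w \<in> {v \<in> fvec (B 0). aug v = 0}" using tPhi_fvec[OF w] by simp
      then obtain v where v: "v \<in> fvec (B 1)" and vw: "tPhi \<iota> w = gapp (B 1) (B 0) (D 1) v" using R_ker0 by auto
      have eq: "tPhi \<iota> (gapp (?B 1) (?B 0) (?D 1) (tPsi \<iota> (B 1) v)) = tPhi \<iota> w"
        using TG[of 1 0 "tPsi \<iota> (B 1) v"] tPhi_tPsi[OF v] vw by simp
      have "gapp (?B 1) (?B 0) (?D 1) (tPsi \<iota> (B 1) v) = w"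
        by (rule tPhi_inj[OF gapp_fvec w eq])
      then have "w = gapp (?B 1) (?B 0) (?D 1) (tPsi \<iota> (B 1) v)" by simp
      then show "w \<in> dapp (?B 1) (?B 0) (?D 1) ` fvec (?B 1)" unfolding dapp_gapp using tPsi_fvec by blast
    qed
  next
    show "?R \<subseteq> ?L"
    proof
      fix w assume "w \<in> dapp (?B 1) (?B 0) (?D 1) ` fvec (?B 1)"
      then obtain v where v: "v \<in> fvec (?B 1)" and wv: "w = gapp (?B 1) (?B 0) (?D 1) v" by (auto simp: dapp_gapp)
      have "tPhi \<iota> w = gapp (B 1) (B 0) (D 1) (tPhi \<iota> v)" using TG[of 1 0 v] wv by simp
      then have "tPhi \<iota> w \<in> {v \<in> fvec (B 0). aug v = 0}"
        using R_ker0 tPhi_fvec[OF v] by auto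
      then show "w \<in> {v \<in> fvec (?B 0). ?a v = 0}" using wv gapp_fvec by auto
    qed
  qed
  show ?thesis unfolding is_free_resolution_def
    apply (intro conjI)
         apply (fact A1)
        apply (fact A2)
       apply (fact A3)
      apply (fact A4)
     apply (fact A5)
    apply (fact A6)
    done
qed

lemma transport_min:
  assumes "minimal_cx J B D"
  shows "minimal_cx J (\<lambda>t. \<iota> ` B t) (\<lambda>t y x. D t (inv_into UNIV \<iota> y) (inv_into UNIV \<iota> x))"
  using assms inj by (auto simp: minimal_cx_def)

end



definition Sm :: "(nat \<Rightarrow> nat) \<Rightarrow> nat \<Rightarrow> nat \<Rightarrow> nat multiset set" where
  "Sm b i k = {M. set_mset M \<subseteq> {..<b i} \<and> (odd i \<longrightarrow> (\<forall>x. count M x \<le> 1)) \<and> size M = k}"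

lemma Sm_sub: "Sm b i k \<subseteq> multisets_of_size {..<b i} k"
  by (auto simp: Sm_def multisets_of_size_def)

lemma Sm_finite: "finite (Sm b i k)"
  by (rule finite_subset[OF Sm_sub]) (rule finite_multisets_of_size, simp)

lemma mset_set_set_mset_01:
  assumes "\<forall>x. count M x \<le> 1"
  shows "mset_set (set_mset M) = M"
proof (rule multiset_eqI)
  fix x
  show "count (mset_set (set_mset M)) x = count M x"
  proof (cases "x \<in># M")
    case True
    then have "0 < count M x" by simp
    then have "count M x = 1" using assms[rule_format, of x] by linarith
    then show ?thesis using True by (simp add: count_mset_set')
  next
    case False
    then show ?thesis by (simp add: count_mset_set' not_in_iff)
  qed
qed

lemma card_Sm: "card (Sm b i k) = (if even i then (b i + k - 1) choose k else b i choose k)"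
proof (cases "even i")
  case True
  then have "Sm b i k = multisets_of_size {..<b i} k" by (auto simp: Sm_def multisets_of_size_def)
  then show ?thesis using True card_multisets_of_size[of "{..<b i}" k] by simp
next
  case False
  have e: "Sm b i k = mset_set ` {A. A \<subseteq> {..<b i} \<and> card A = k}"
  proof (rule equalityI)
    show "Sm b i k \<subseteq> mset_set ` {A. A \<subseteq> {..<b i} \<and> card A = k}"
    proof
      fix M assume M: "M \<in> Sm b i k"
      then have c: "\<forall>x. count M x \<le> 1" using False by (simp add: Sm_def)
      have e1: "mset_set (set_mset M) = M" by (rule mset_set_set_mset_01[OF c])
      have "card (set_mset M) = size M" using e1 size_mset_set[of "set_mset M"] by simp
      then have "set_mset M \<in> {A. A \<subseteq> {..<b i} \<and> card A = k}" using M by (simp add: Sm_def)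
      then show "M \<in> mset_set ` {A. A \<subseteq> {..<b i} \<and> card A = k}" using e1 by (metis imageI)
    qed
  next
    show "mset_set ` {A. A \<subseteq> {..<b i} \<and> card A = k} \<subseteq> Sm b i k"
    proof
      fix M assume "M \<in> mset_set ` {A. A \<subseteq> {..<b i} \<and> card A = k}"
      then obtain A where A: "A \<subseteq> {..<b i}" "card A = k" and M: "M = mset_set A" by auto
      have fA: "finite A" using A(1) finite_subset by blast
      show "M \<in> Sm b i k" unfolding Sm_def using A fA M by (auto simp: count_mset_set')
    qed
  qed
  have inj: "inj_on mset_set {A. A \<subseteq> {..<b i} \<and> card A = k}"
  proof (rule inj_onI)
    fix A A' assume "A \<in> {A. A \<subseteq> {..<b i} \<and> card A = k}" "A' \<in> {A. A \<subseteq> {..<b i} \<and> card A = k}"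
      and eq: "mset_set A = mset_set A'"
    then have "finite A" "finite A'" using finite_subset by auto
    then show "A = A'" using eq by (metis finite_set_mset_mset_set)
  qed
  have "card (Sm b i k) = card {A. A \<subseteq> {..<b i} \<and> card A = k}" unfolding e by (rule card_image[OF inj])
  also have "\<dots> = b i choose k" using n_subsets[of "{..<b i}" k] by simp
  finally show ?thesis using False by simp
qed

definition Fib :: "nat \<Rightarrow> (nat \<Rightarrow> nat) \<Rightarrow> (nat \<Rightarrow> nat) \<Rightarrow> nat multiset list set" where
  "Fib p b a = {L. length L = Suc p \<and> (\<forall>i\<le>p. L ! i \<in> Sm b i (a i))}"

lemma Fib_bij: "bij_betw (\<lambda>L. restrict (\<lambda>i. L ! i) {..p}) (Fib p b a) (PiE {..p} (\<lambda>i. Sm b i (a i)))"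
proof (rule bij_betw_byWitness[where f'="\<lambda>g. map g [0..<Suc p]"])
  show "\<forall>L\<in>Fib p b a. map (restrict (\<lambda>i. L ! i) {..p}) [0..<Suc p] = L"
    by (auto simp: Fib_def nth_map_upt less_Suc_eq_le simp del: upt_Suc intro!: nth_equalityI)
  show "\<forall>g\<in>PiE {..p} (\<lambda>i. Sm b i (a i)). restrict (\<lambda>i. map g [0..<Suc p] ! i) {..p} = g"
  proof
    fix g assume g: "g \<in> PiE {..p} (\<lambda>i. Sm b i (a i))"
    show "restrict (\<lambda>i. map g [0..<Suc p] ! i) {..p} = g"
    proof
      fix i show "restrict (\<lambda>i. map g [0..<Suc p] ! i) {..p} i = g i"
        using g by (cases "i \<le> p") (auto simp: PiE_def extensional_def nth_map_upt less_Suc_eq_le simp del: upt_Suc)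
    qed
  qed
  show "(\<lambda>L. restrict (\<lambda>i. L ! i) {..p}) ` Fib p b a \<subseteq> PiE {..p} (\<lambda>i. Sm b i (a i))"
  proof (rule image_subsetI)
    fix L assume "L \<in> Fib p b a"
    then show "restrict (\<lambda>i. L ! i) {..p} \<in> PiE {..p} (\<lambda>i. Sm b i (a i))"
      by (intro restrict_PiE_iff[THEN iffD2]) (simp add: Fib_def)
  qed
  show "(\<lambda>g. map g [0..<Suc p]) ` PiE {..p} (\<lambda>i. Sm b i (a i)) \<subseteq> Fib p b a"
    by (auto simp: Fib_def PiE_def Pi_def nth_map_upt less_Suc_eq_le simp del: upt_Suc)
qed

lemma card_Fib: "card (Fib p b a) = (\<Prod>i\<le>p. card (Sm b i (a i)))"
  using bij_betw_same_card[OF Fib_bij] card_PiE[of "{..p}"] by simp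

lemma finite_Fib: "finite (Fib p b a)"
proof -
  have "finite (PiE {..p} (\<lambda>i. Sm b i (a i)))" by (rule finite_PiE) (auto intro: Sm_finite)
  then show ?thesis using bij_betw_finite[OF Fib_bij] by blast
qed

lemma finite_tuples: "finite (tuples p j t)"
proof (rule finite_subset)
  show "tuples p j t \<subseteq> (\<lambda>f i. if i \<le> p then f i else 0) ` PiE {..p} (\<lambda>_. {..j})"
  proof
    fix a assume a: "a \<in> tuples p j t"
    have le: "a i \<le> j" if "i \<le> p" for i
    proof -
      have "a i \<le> (\<Sum>i\<le>p. a i)" using that by (intro member_le_sum) auto
      then show ?thesis using a by (simp add: tuples_def)
    qed
    have "a = (\<lambda>i. if i \<le> p then restrict a {..p} i else 0)"
      using a by (auto simp: tuples_def fun_eq_iff)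
    moreover have "restrict a {..p} \<in> PiE {..p} (\<lambda>_. {..j})" using le by auto
    ultimately show "a \<in> (\<lambda>f i. if i \<le> p then f i else 0) ` PiE {..p} (\<lambda>_. {..j})" by blast
  qed
  show "finite ((\<lambda>f i. if i \<le> p then f i else 0) ` PiE {..p} (\<lambda>_. {..j}))"
    by (intro finite_imageI finite_PiE) auto
qed

lemma SjB_UN: "SjB p b j t = (\<Union>a\<in>tuples p j t. Fib p b a)"
proof (rule equalityI)
  show "SjB p b j t \<subseteq> (\<Union>a\<in>tuples p j t. Fib p b a)"
  proof
    fix L assume L: "L \<in> SjB p b j t"
    define a where "a = (\<lambda>i. if i \<le> p then size (L ! i) else 0)"
    have "(\<Sum>i\<le>p. a i) = (\<Sum>i\<le>p. size (L ! i))" by (intro sum.cong) (auto simp: a_def)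
    moreover have "(\<Sum>i\<le>p. i * a i) = (\<Sum>i\<le>p. i * size (L ! i))" by (intro sum.cong) (auto simp: a_def)
    ultimately have "a \<in> tuples p j t" using L by (auto simp: tuples_def SjB_def a_def)
    moreover have "L \<in> Fib p b a" using L by (auto simp: Fib_def SjB_def Sm_def a_def)
    ultimately show "L \<in> (\<Union>a\<in>tuples p j t. Fib p b a)" by blast
  qed
next
  show "(\<Union>a\<in>tuples p j t. Fib p b a) \<subseteq> SjB p b j t"
  proof
    fix L assume "L \<in> (\<Union>a\<in>tuples p j t. Fib p b a)"
    then obtain a where a: "a \<in> tuples p j t" and L: "L \<in> Fib p b a" by blast
    have sz: "size (L ! i) = a i" if "i \<le> p" for i using L that by (simp add: Fib_def Sm_def)
    have "(\<Sum>i\<le>p. size (L ! i)) = (\<Sum>i\<le>p. a i)" by (intro sum.cong) (auto simp: sz)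
    moreover have "(\<Sum>i\<le>p. i * size (L ! i)) = (\<Sum>i\<le>p. i * a i)" by (intro sum.cong) (auto simp: sz)
    ultimately show "L \<in> SjB p b j t" using a L by (auto simp: tuples_def SjB_def Fib_def Sm_def)
  qed
qed

lemma card_SjB: "card (SjB p b j t) =
   (\<Sum>a\<in>tuples p j t. \<Prod>i\<le>p. if even i then (b i + a i - 1) choose a i else b i choose a i)"
proof -
  have disj: "\<forall>a\<in>tuples p j t. \<forall>a'\<in>tuples p j t. a \<noteq> a' \<longrightarrow> Fib p b a \<inter> Fib p b a' = {}"
  proof (intro ballI impI)
    fix a a' assume a: "a \<in> tuples p j t" and a': "a' \<in> tuples p j t" and ne: "a \<noteq> a'"
    show "Fib p b a \<inter> Fib p b a' = {}"
    proof (rule ccontr)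
      assume "Fib p b a \<inter> Fib p b a' \<noteq> {}"
      then obtain L where L: "L \<in> Fib p b a" "L \<in> Fib p b a'" by blast
      have "a i = a' i" for i
      proof (cases "i \<le> p")
        case True then show ?thesis using L by (auto simp: Fib_def Sm_def)
      next
        case False then show ?thesis using a a' by (simp add: tuples_def)
      qed
      then show False using ne by auto
    qed
  qed
  have "card (SjB p b j t) = (\<Sum>a\<in>tuples p j t. card (Fib p b a))"
    unfolding SjB_UN by (rule card_UN_disjoint[OF finite_tuples _ disj]) (simp add: finite_Fib)
  also have "\<dots> = (\<Sum>a\<in>tuples p j t. \<Prod>i\<le>p. if even i then (b i + a i - 1) choose a i else b i choose a i)"
    by (intro sum.cong refl) (simp add: card_Fib card_Sm)
  finally show ?thesis .
qed


lemma local_ideal: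
  fixes mm :: "'a::comm_ring_1 set"
  assumes "local_ring mm"
  shows "is_ideal mm" and "1 \<notin> mm"
proof -
  have m: "maximal_ideal mm" using assms by (simp add: local_ring_def)
  then show J: "is_ideal mm" by (simp add: maximal_ideal_def)
  show "1 \<notin> mm"
  proof
    assume "1 \<in> mm"
    then have "r \<in> mm" for r using id_multl[OF J, of 1 r] by simp
    then have "mm = UNIV" by auto
    then show False using m by (simp add: maximal_ideal_def)
  qed
qed

lemma max_inv:
  fixes m :: "'a::comm_ring_1 set"
  assumes mx: "maximal_ideal m" and x: "x \<notin> m"
  shows "\<exists>u. u * x - 1 \<in> m"
proof -
  have J: "is_ideal m" using mx by (simp add: maximal_ideal_def)
  define I where "I = {y. \<exists>k\<in>m. \<exists>r. y = k + r * x}"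
  have iI: "is_ideal I" unfolding is_ideal_def
  proof (intro conjI ballI allI)
    show "0 \<in> I" unfolding I_def using id_0[OF J] by (intro CollectI bexI[of _ 0] exI[of _ 0]) auto
  next
    fix y z assume "y \<in> I" "z \<in> I"
    then obtain k1 r1 k2 r2 where "k1 \<in> m" "k2 \<in> m" "y = k1 + r1 * x" "z = k2 + r2 * x" unfolding I_def by blast
    then show "y + z \<in> I" unfolding I_def
      by (intro CollectI bexI[of _ "k1 + k2"] exI[of _ "r1 + r2"]) (auto simp: algebra_simps id_add[OF J])
  next
    fix s y assume "y \<in> I"
    then obtain k r where "k \<in> m" "y = k + r * x" unfolding I_def by blast
    then show "s * y \<in> I" unfolding I_def
      by (intro CollectI bexI[of _ "s * k"] exI[of _ "s * r"]) (auto simp: algebra_simps id_multl[OF J] id_multr[OF J])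
  qed
  have sub: "m \<subseteq> I" unfolding I_def by (auto intro!: exI[of _ 0])
  have "x \<in> I" unfolding I_def using id_0[OF J] by (intro CollectI bexI[of _ 0] exI[of _ 1]) auto
  then have "I \<noteq> m" using x by blast
  then have "I = UNIV" using mx iI sub unfolding maximal_ideal_def by blast
  then have "1 \<in> I" by simp
  then obtain k r where k: "k \<in> m" and e: "1 = k + r * x" unfolding I_def by blast
  have "r * x - 1 = - k" using e by (simp add: algebra_simps)
  then show ?thesis using id_uminus[OF J k] by metis
qed

lemma SjD_min:
  fixes \<phi> :: "nat \<Rightarrow> nat \<Rightarrow> nat \<Rightarrow> 'a::comm_ring_1"
  assumes J: "is_ideal J" and mF: "minimal_cx J (\<lambda>i. {..<b i}) \<phi>"
  shows "minimal_cx J (SjB p b j) (SjD p b \<phi>)"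
  unfolding minimal_cx_def
proof (intro allI impI ballI)
  fix t y x assume x: "x \<in> SjB p b j t"
  have phin: "\<phi> (Suc i) m l \<in> J" if "m < b i" "l < b (Suc i)" for i m l
    using mF[unfolded minimal_cx_def, rule_format, of "Suc i" m l] that by simp
  have lb: "l < b (Suc i)" if "i < p" "l \<in> set_mset (x ! Suc i)" for i l
  proof -
    have H: "\<forall>i\<le>p. set_mset (x ! i) \<subseteq> {..<b i}" using x by (simp add: SjB_def)
    have "set_mset (x ! Suc i) \<subseteq> {..<b (Suc i)}" using H[rule_format, OF Suc_leI[OF that(1)]] .
    then show ?thesis using that(2) by auto
  qed
  have comp: "SjComp \<phi> i x l m \<in> J" if "i < p" "l \<in> set_mset (x ! Suc i)" "m < b i" for i l m
  proof -
    have f: "\<phi> (Suc i) m l \<in> J" using phin[OF that(3) lb[OF that(1,2)]] .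
    show ?thesis unfolding SjComp_def
      by (rule id_multl[OF J]) (simp only: split: if_split, intro conjI impI id_0[OF J] id_multl[OF J f])
  qed
  show "SjD p b \<phi> t y x \<in> J" unfolding SjD_def
    by (intro id_sum[OF J]) (auto simp: id_0[OF J] comp)
qed

theorem proposition5p1:
  fixes scaleM :: "'a::comm_ring_1 \<Rightarrow> 'm::ab_group_add \<Rightarrow> 'm"
    and scaleN :: "'a \<Rightarrow> 'n::ab_group_add \<Rightarrow> 'n"
    and mm :: "'a set" and j p :: nat
    and b :: "nat \<Rightarrow> nat" and \<phi> :: "nat \<Rightarrow> nat \<Rightarrow> nat \<Rightarrow> 'a"
    and \<epsilon> :: "(nat \<Rightarrow> 'a) \<Rightarrow> 'm" and \<sigma> :: "'m list \<Rightarrow> 'n"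
  assumes "noetherian_ring TYPE('a)" and "local_ring mm"
    and "module scaleM" and "fin_gen scaleM"
    and "j \<ge> 2"
    and "pdim scaleM = p"
    and "is_free_resolution scaleM (\<lambda>i. {..<b i}) \<phi> \<epsilon>"
    and "minimal_cx mm (\<lambda>i. {..<b i}) \<phi>"
    and "\<forall>i>p. b i = 0"
    and "module scaleN" and "is_sym_power scaleM scaleN j \<sigma>"
    and "\<exists>aug. is_free_resolution scaleN (SjB p b j) (SjD p b \<phi>) aug"
  shows "minimal_cx mm (SjB p b j) (SjD p b \<phi>) \<longleftrightarrow>
    (\<forall>t \<le> pdim scaleN. betti scaleN mm t =
       (\<Sum>a\<in>tuples p j t.
          (\<Prod>i\<le>p. if even i then (betti scaleM mm i + a i - 1) choose a i
                              else betti scaleM mm i choose a i)))"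
proof -
  have J: "is_ideal mm" and one: "1 \<notin> mm" using local_ideal[OF assms(2)] by auto
  have inv: "\<And>x. x \<notin> mm \<Longrightarrow> \<exists>u. u * x - 1 \<in> mm"
    using max_inv assms(2) unfolding local_ring_def by blast
  have minN: "minimal_cx mm (SjB p b j) (SjD p b \<phi>)" by (rule SjD_min[OF J assms(8)])
  have bM: "betti scaleM mm i = b i" for i
    using betti_eq[OF assms(7) assms(8) J one inv, of i] by simp
  obtain aug where rN: "is_free_resolution scaleN (SjB p b j) (SjD p b \<phi>) aug" using assms(12) by blast
  define \<iota> :: "nat multiset list \<Rightarrow> nat" where "\<iota> = (\<lambda>L. to_nat (map sorted_list_of_multiset L))"
  have injs: "inj (sorted_list_of_multiset :: nat multiset \<Rightarrow> nat list)"
    by (rule injI) (metis mset_sorted_list_of_multiset)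
  have inj: "inj \<iota>"
  proof (rule injI)
    fix L L' assume "\<iota> L = \<iota> L'"
    then have "map sorted_list_of_multiset L = map sorted_list_of_multiset L'"
      unfolding \<iota>_def by (simp add: inj_eq[OF inj_to_nat])
    then show "L = L'" using injs by simp
  qed
  have rN': "is_free_resolution scaleN (\<lambda>t. \<iota> ` SjB p b j t)
      (\<lambda>t y x. SjD p b \<phi> t (inv_into UNIV \<iota> y) (inv_into UNIV \<iota> x)) (\<lambda>w. aug (tPhi \<iota> w))"
    by (rule transport_res[OF inj rN])
  have mN': "minimal_cx mm (\<lambda>t. \<iota> ` SjB p b j t) (\<lambda>t y x. SjD p b \<phi> t (inv_into UNIV \<iota> y) (inv_into UNIV \<iota> x))"
    by (rule transport_min[OF inj minN])
  have bN: "betti scaleN mm t = card (SjB p b j t)" for t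
  proof -
    have "betti scaleN mm t = card (\<iota> ` SjB p b j t)" using betti_eq[OF rN' mN' J one inv, of t] by simp
    also have "\<dots> = card (SjB p b j t)" by (rule card_image[OF inj_on_subset[OF inj subset_UNIV]])
    finally show ?thesis .
  qed
  show ?thesis unfolding bM bN card_SjB using minN by simp
qed

end
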